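(* Let $A,B\in\mathrm{SL}_2\mathbb{R}$ be noncommuting hyperbolic matrices with $\mathrm{tr}(A),\mathrm{tr}(B)\ge 2$, and assume that the pair $A,B$ is coherently oriented with $I^+\cap I^-=\emptyset$. Then $\ell(AB)$ is less than, equal to, or greater than $\ell(A)+\ell(B)$ if and only if the translation axes of $A$ and $B$ are intersecting, asymptotically parallel (distinct, sharing an ideal endpoint), or ultraparallel (disjoint with no common ideal endpoint), respectively.
   Context: $\mathrm{SL}_2\mathbb{R}$ acts on the hyperbolic plane $\mathcal{H}=\{z\in\mathbb{C}:\operatorname{Im}z>0\}$ and on its boundary $\partial\mathcal{H}=\mathbb{P}^1\mathbb{R}$ by Möbius transformations. A nonidentity matrix of trace $\ge 2$ is parabolic (one fixed point in $\partial\mathcal{H}$, trace $=2$) or hyperbolic (two fixed points, trace $>2$). For a hyperbolic $A$, $\alpha^+$ denotes its attracting fixed point and $\alpha^-$ its repelling one (similarly $\beta^\pm$ for $B$); for parabolic $A$, $\alpha^+=\alpha^-$ is its unique fixed point. The translation length is $\ell(A)=\inf\{d(z,A*z):z\in\mathcal{H}\}$ ($d$ the hyperbolic distance); for hyperbolic $A$ the translation axis is the geodesic with endpoints $\alpha^+,\alpha^-$. The circle $\partial\mathcal{H}$ is cyclically (counterclockwise) ordered, and for distinct $\alpha,\beta$ the closed interval $[\alpha,\beta]$ consists of $\alpha,\beta$ and the points met travelling counterclockwise from $\alpha$ to $\beta$. For noncommuting $A,B$ of trace $\ge2$: if $\alpha^+=\beta^+$ let $I^+=\{\alpha^+\}$;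 otherwise $I^+$ is the one of the two intervals $[\alpha^+,\beta^+]$, $[\beta^+,\alpha^+]$ mapped into itself by both $A$ and $B$, if such exists (else $I^+$ is undefined). $I^-$ is defined in the same way using $A^{-1},B^{-1}$ and $\alpha^-,\beta^-$. The pair $A,B$ is coherently oriented if both $I^+$ and $I^-$ are defined. *)

theory Defs
  imports "HOL-Analysis.Analysis"
begin

definition ma :: "real^2^2 \<Rightarrow> real" where "ma A = A $ 1 $ 1"
definition mb :: "real^2^2 \<Rightarrow> real" where "mb A = A $ 1 $ 2"
definition mc :: "real^2^2 \<Rightarrow> real" where "mc A = A $ 2 $ 1"
definition md :: "real^2^2 \<Rightarrow> real" where "md A = A $ 2 $ 2"

definition SL2R :: "real^2^2 \<Rightarrow> bool" where "SL2R A \<longleftrightarrow> det A = 1"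

definition hyperbolic :: "real^2^2 \<Rightarrow> bool" where
  "hyperbolic A \<longleftrightarrow> trace A > 2"

definition uhp :: "complex set" where "uhp = {z. Im z > 0}"

definition mact :: "real^2^2 \<Rightarrow> complex \<Rightarrow> complex" where
  "mact A z = (of_real (ma A) * z + of_real (mb A)) / (of_real (mc A) * z + of_real (md A))"

definition hdist :: "complex \<Rightarrow> complex \<Rightarrow> real" where
  "hdist z w = arcosh (1 + (cmod (z - w))\<^sup>2 / (2 * Im z * Im w))"

definition tlen :: "real^2^2 \<Rightarrow> real" where
  "tlen A = Inf ((\<lambda>z. hdist z (mact A z)) ` uhp)"

text \<open>Boundary P^1(R) = R \<union> {\<infinity>}, modelled as real option (None = \<infinity>),
  with the Moebius action on it.\<close>

type_synonym bpt = "real option"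

fun bact :: "real^2^2 \<Rightarrow> bpt \<Rightarrow> bpt" where
  "bact A None = (if mc A = 0 then None else Some (ma A / mc A))"
| "bact A (Some x) = (if mc A * x + md A = 0 then None
                      else Some ((ma A * x + mb A) / (mc A * x + md A)))"

definition bconv :: "(nat \<Rightarrow> bpt) \<Rightarrow> bpt \<Rightarrow> bool" where
  "bconv s p \<longleftrightarrow> (case p of
      Some r \<Rightarrow> (\<forall>e>0. \<forall>\<^sub>F n in sequentially. \<exists>y. s n = Some y \<and> \<bar>y - r\<bar> < e)
    | None \<Rightarrow> (\<forall>M. \<forall>\<^sub>F n in sequentially. s n = None \<or> (\<exists>y. s n = Some y \<and> \<bar>y\<bar> > M)))"

definition bfixed :: "real^2^2 \<Rightarrow> bpt \<Rightarrow> bool" where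
  "bfixed A p \<longleftrightarrow> bact A p = p"

definition attr :: "real^2^2 \<Rightarrow> bpt" where
  "attr A = (THE p. bfixed A p \<and>
      (\<forall>x. \<not> bfixed A x \<longrightarrow> bconv (\<lambda>n. (bact A ^^ n) x) p))"

definition repel :: "real^2^2 \<Rightarrow> bpt" where
  "repel A = attr (matrix_inv A)"

text \<open>Counterclockwise on the
  boundary of the upper half plane means increasing along R, passing through \<infinity>.
  blt is the linear order on R \<union> {\<infinity>} with \<infinity> on top.\<close>

fun blt :: "bpt \<Rightarrow> bpt \<Rightarrow> bool" where
  "blt (Some x) (Some y) = (x < y)"
| "blt (Some x) None = True"
| "blt None _ = False"

definition cyc_between :: "bpt \<Rightarrow> bpt \<Rightarrow> bpt \<Rightarrow> bool" where
  "cyc_between a x b \<longleftrightarrow>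
     (blt a x \<and> blt x b) \<or> (blt x b \<and> blt b a) \<or> (blt b a \<and> blt a x)"

definition cinterval :: "bpt \<Rightarrow> bpt \<Rightarrow> bpt set" where
  "cinterval a b = {x. x = a \<or> x = b \<or> cyc_between a x b}"

definition inv_both :: "real^2^2 \<Rightarrow> real^2^2 \<Rightarrow> bpt set \<Rightarrow> bool" where
  "inv_both A B I \<longleftrightarrow> bact A ` I \<subseteq> I \<and> bact B ` I \<subseteq> I"

definition Iint :: "real^2^2 \<Rightarrow> real^2^2 \<Rightarrow> bpt \<Rightarrow> bpt \<Rightarrow> bpt set option" where
  "Iint A B a b = (if a = b then Some {a}
     else if inv_both A B (cinterval a b) then Some (cinterval a b)
     else if inv_both A B (cinterval b a) then Some (cinterval b a)
     else None)"

definition Iplus :: "real^2^2 \<Rightarrow> real^2^2 \<Rightarrow> bpt set option" where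
  "Iplus A B = Iint A B (attr A) (attr B)"

definition Iminus :: "real^2^2 \<Rightarrow> real^2^2 \<Rightarrow> bpt set option" where
  "Iminus A B = Iint (matrix_inv A) (matrix_inv B) (repel A) (repel B)"

definition coherently_oriented :: "real^2^2 \<Rightarrow> real^2^2 \<Rightarrow> bool" where
  "coherently_oriented A B \<longleftrightarrow> Iplus A B \<noteq> None \<and> Iminus A B \<noteq> None"

fun geodesic :: "bpt \<Rightarrow> bpt \<Rightarrow> complex set" where
  "geodesic (Some p) (Some q) =
     {z. Im z > 0 \<and> cmod (z - of_real ((p + q) / 2)) = \<bar>p - q\<bar> / 2}"
| "geodesic (Some p) None = {z. Im z > 0 \<and> Re z = p}"
| "geodesic None (Some q) = {z. Im z > 0 \<and> Re z = q}"
| "geodesic None None = {}"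

definition axis :: "real^2^2 \<Rightarrow> complex set" where
  "axis A = geodesic (attr A) (repel A)"

definition axes_intersecting :: "real^2^2 \<Rightarrow> real^2^2 \<Rightarrow> bool" where
  "axes_intersecting A B \<longleftrightarrow> axis A \<inter> axis B \<noteq> {}"

definition axes_asymptotically_parallel :: "real^2^2 \<Rightarrow> real^2^2 \<Rightarrow> bool" where
  "axes_asymptotically_parallel A B \<longleftrightarrow>
     axis A \<noteq> axis B \<and> {attr A, repel A} \<inter> {attr B, repel B} \<noteq> {}"

definition axes_ultraparallel :: "real^2^2 \<Rightarrow> real^2^2 \<Rightarrow> bool" where
  "axes_ultraparallel A B \<longleftrightarrow>
     axis A \<inter> axis B = {} \<and> {attr A, repel A} \<inter> {attr B, repel B} = {}"

end

theory Submission
  imports Defs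
begin


lemma entries_mult:
 "ma (A ** B) = ma A * ma B + mb A * mc B"
 "mb (A ** B) = ma A * mb B + mb A * md B"
 "mc (A ** B) = mc A * ma B + md A * mc B"
 "md (A ** B) = mc A * mb B + md A * md B"
 by (simp_all add: ma_def mb_def mc_def md_def matrix_matrix_mult_def sum_2)

lemma det_entries: "det A = ma A * md A - mb A * mc A"
  by (simp add: det_2 ma_def mb_def mc_def md_def)

lemma trace_entries: "trace A = ma A + md A"
  by (simp add: trace_def sum_2 ma_def md_def)

lemma mat1_entries: "ma (mat 1) = 1" "mb (mat 1) = 0" "mc (mat 1) = 0" "md (mat 1) = 1"
  by (simp_all add: mat_def ma_def mb_def mc_def md_def)

lemma matrix_eq_entries: "(A::real^2^2) = B \<longleftrightarrow> ma A = ma B \<and> mb A = mb B \<and> mc A = mc B \<and> md A = md B"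
  by (simp add: vec_eq_iff forall_2 ma_def mb_def mc_def md_def)



fun pj :: "real \<times> real \<Rightarrow> bpt" where
  "pj (x, y) = (if y = 0 then None else Some (x / y))"

fun brk :: "real \<times> real \<Rightarrow> real \<times> real \<Rightarrow> real" where
  "brk (x1, x2) (y1, y2) = x1 * y2 - x2 * y1"

fun mv :: "real^2^2 \<Rightarrow> real \<times> real \<Rightarrow> real \<times> real" where
  "mv M (x, y) = (ma M * x + mb M * y, mc M * x + md M * y)"

fun sc :: "real \<Rightarrow> real \<times> real \<Rightarrow> real \<times> real" where
  "sc k (x, y) = (k * x, k * y)"

lemma bact_pj: "v \<noteq> (0,0) \<Longrightarrow> bact M (pj v) = pj (mv M v)"
proof (cases v)
  case (Pair x y)
  assume v: "v \<noteq> (0,0)"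
  show ?thesis
  proof (cases "y = 0")
    case True
    then have "x \<noteq> 0" using v Pair by auto
    then show ?thesis using True Pair by auto
  next
    case False
    have e1: "ma M * x + mb M * y = y * (ma M * (x/y) + mb M)" "mc M * x + md M * y = y * (mc M * (x/y) + md M)"
      using False by (simp_all add: field_simps)
    have e: "(ma M * x + mb M * y) / (mc M * x + md M * y) = (ma M * (x/y) + mb M) / (mc M * (x/y) + md M)"
      unfolding e1 using False by simp
    have "mc M * x + md M * y = 0 \<longleftrightarrow> mc M * (x/y) + md M = 0"
      using False by (auto simp: field_simps)
    then show ?thesis using False Pair e by auto
  qed
qed

lemma pj_norm: "v \<noteq> (0,0) \<Longrightarrow> \<exists>k r. k \<noteq> 0 \<and> ((v = (k*r, k) \<and> pj v = Some r) \<or> (v = (k, 0) \<and> pj v = None))"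
proof (cases v)
  case (Pair x y)
  assume v: "v \<noteq> (0,0)"
  show ?thesis
  proof (cases "y = 0")
    case True
    then show ?thesis using v Pair by auto
  next
    case False
    show ?thesis using False Pair by (intro exI[of _ y] exI[of _ "x/y"]) auto
  qed
qed

lemma pj_surj: "\<exists>v. v \<noteq> (0,0) \<and> x = pj v"
proof (cases x)
  case None
  then show ?thesis by (intro exI[of _ "(1,0)"]) auto
next
  case (Some r)
  then show ?thesis by (intro exI[of _ "(r,1)"]) auto
qed

lemma pj_eq: assumes "v \<noteq> (0,0)" "w \<noteq> (0,0)" shows "pj v = pj w \<longleftrightarrow> brk v w = 0"
proof -
  obtain k r where k: "k \<noteq> 0" "(v = (k*r, k) \<and> pj v = Some r) \<or> (v = (k, 0) \<and> pj v = None)"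
    using pj_norm[OF assms(1)] by blast
  obtain k' r' where k': "k' \<noteq> 0" "(w = (k'*r', k') \<and> pj w = Some r') \<or> (w = (k', 0) \<and> pj w = None)"
    using pj_norm[OF assms(2)] by blast
  show ?thesis using k k' by (auto simp: algebra_simps)
qed

lemma pj_sc: "k \<noteq> 0 \<Longrightarrow> pj (sc k v) = pj v"
  by (cases v) auto

lemma brk_sc1: "brk (sc k v) w = k * brk v w" by (cases v; cases w) (auto simp: algebra_simps)
lemma brk_sc2: "brk v (sc k w) = k * brk v w" by (cases v; cases w) (auto simp: algebra_simps)
lemma brk_anti: "brk v w = - brk w v" by (cases v; cases w) auto
lemma brk_self: "brk v v = 0" by (cases v) auto

lemma cyc_real: "(a - x) * (x - b) * (b - a) > (0::real) \<longleftrightarrow> (a < x \<and> x < b) \<or> (x < b \<and> b < a) \<or> (b < a \<and> a < x)"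
  unfolding zero_less_mult_iff mult_less_0_iff by auto

lemma cyc_pj:
  assumes "a \<noteq> (0,0)" "x \<noteq> (0,0)" "b \<noteq> (0,0)"
  shows "cyc_between (pj a) (pj x) (pj b) \<longleftrightarrow> brk a x * brk x b * brk b a > 0"
proof -
  obtain k r where k: "k \<noteq> 0" "(a = (k*r, k) \<and> pj a = Some r) \<or> (a = (k, 0) \<and> pj a = None)"
    using pj_norm[OF assms(1)] by blast
  obtain k' r' where k': "k' \<noteq> 0" "(x = (k'*r', k') \<and> pj x = Some r') \<or> (x = (k', 0) \<and> pj x = None)"
    using pj_norm[OF assms(2)] by blast
  obtain k'' r'' where k'': "k'' \<noteq> 0" "(b = (k''*r'', k'') \<and> pj b = Some r'') \<or> (b = (k'', 0) \<and> pj b = None)"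
    using pj_norm[OF assms(3)] by blast
  have pos: "(k*k'*k'')^2 > 0" using k k' k'' by simp
  have e1: "brk (k*r, k) (k'*r', k') * brk (k'*r', k') (k''*r'', k'') * brk (k''*r'', k'') (k*r, k)
     = (k*k'*k'')^2 * ((r - r') * (r' - r'') * (r'' - r))" by (simp add: algebra_simps power2_eq_square)
  have e2: "brk (k*r, k) (k'*r', k') * brk (k'*r', k') (k'', 0) * brk (k'', 0) (k*r, k)
     = (k*k'*k'')^2 * (r' - r)" by (simp add: algebra_simps power2_eq_square)
  have e3: "brk (k*r, k) (k', 0) * brk (k', 0) (k''*r'', k'') * brk (k''*r'', k'') (k*r, k)
     = (k*k'*k'')^2 * (r - r'')" by (simp add: algebra_simps power2_eq_square)
  have e4: "brk (k, 0) (k'*r', k') * brk (k'*r', k') (k''*r'', k'') * brk (k''*r'', k'') (k, 0)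
     = (k*k'*k'')^2 * (r'' - r')" by (simp add: algebra_simps power2_eq_square)
  have i1: "0 < brk (k*r, k) (k'*r', k') * brk (k'*r', k') (k''*r'', k'') * brk (k''*r'', k'') (k*r, k)
     \<longleftrightarrow> cyc_between (Some r) (Some r') (Some r'')"
    unfolding e1 cyc_between_def blt.simps using pos cyc_real[of r r' r''] by (metis mult_pos_pos zero_less_mult_pos)
  have i2: "0 < brk (k*r, k) (k'*r', k') * brk (k'*r', k') (k'', 0) * brk (k'', 0) (k*r, k)
     \<longleftrightarrow> cyc_between (Some r) (Some r') None"
    unfolding e2 using pos by (auto simp add: zero_less_mult_iff cyc_between_def)
  have i3: "0 < brk (k*r, k) (k', 0) * brk (k', 0) (k''*r'', k'') * brk (k''*r'', k'') (k*r, k)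
     \<longleftrightarrow> cyc_between (Some r) None (Some r'')"
    unfolding e3 using pos by (auto simp add: zero_less_mult_iff cyc_between_def)
  have i4: "0 < brk (k, 0) (k'*r', k') * brk (k'*r', k') (k''*r'', k'') * brk (k''*r'', k'') (k, 0)
     \<longleftrightarrow> cyc_between None (Some r') (Some r'')"
    unfolding e4 using pos by (auto simp add: zero_less_mult_iff cyc_between_def)
  show ?thesis using k(2) k'(2) k''(2)
    apply (elim disjE conjE)
    using i1 i2 i3 i4 by (simp_all add: cyc_between_def)
qed



definition eig :: "real^2^2 \<Rightarrow> real \<times> real \<Rightarrow> real \<Rightarrow> bool" where
  "eig M v l \<longleftrightarrow> v \<noteq> (0,0) \<and> mv M v = sc l v"

lemma eig_simp: "eig M (p1,p2) l \<longleftrightarrow> (p1,p2) \<noteq> (0,0) \<and> ma M * p1 + mb M * p2 = l * p1 \<and> mc M * p1 + md M * p2 = l * p2"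
  by (simp add: eig_def)

lemma lin_nz:
  assumes "brk (p1,p2) (q1,q2) \<noteq> 0" "(a,b) \<noteq> (0,0)"
  shows "(a*p1 + b*q1, a*p2 + b*q2) \<noteq> (0,0)"
proof
  assume h: "(a*p1 + b*q1, a*p2 + b*q2) = (0,0)"
  then have h1: "a*p1 + b*q1 = 0" "a*p2 + b*q2 = 0" by auto
  have "a * (p1*q2 - p2*q1) = q2 * (a*p1 + b*q1) - q1 * (a*p2 + b*q2)" by (simp add: algebra_simps)
  moreover have "b * (p1*q2 - p2*q1) = p1 * (a*p2 + b*q2) - p2 * (a*p1 + b*q1)" by (simp add: algebra_simps)
  ultimately have "a * (p1*q2 - p2*q1) = 0" "b * (p1*q2 - p2*q1) = 0" using h1 by auto
  then show False using assms by auto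
qed

lemma orbit:
  assumes "eig N (p1,p2) l" "eig N (q1,q2) m" "brk (p1,p2) (q1,q2) \<noteq> 0" "(a,b) \<noteq> (0,0)"
    "l \<noteq> 0" "m \<noteq> 0"
  shows "(bact N ^^ n) (pj (a*p1 + b*q1, a*p2 + b*q2)) = pj (l^n*a*p1 + m^n*b*q1, l^n*a*p2 + m^n*b*q2)"
proof (induction n)
  case 0
  then show ?case by simp
next
  case (Suc n)
  have nz: "(l^n*a*p1 + m^n*b*q1, l^n*a*p2 + m^n*b*q2) \<noteq> (0,0)"
    using lin_nz[OF assms(3), of "l^n*a" "m^n*b"] assms(4-6) by (auto simp: mult.assoc)
  have "(bact N ^^ Suc n) (pj (a*p1 + b*q1, a*p2 + b*q2)) = bact N (pj (l^n*a*p1 + m^n*b*q1, l^n*a*p2 + m^n*b*q2))"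
    using Suc by simp
  also have "\<dots> = pj (mv N (l^n*a*p1 + m^n*b*q1, l^n*a*p2 + m^n*b*q2))"
    using bact_pj nz by blast
  also have "mv N (l^n*a*p1 + m^n*b*q1, l^n*a*p2 + m^n*b*q2) = (l^Suc n*a*p1 + m^Suc n*b*q1, l^Suc n*a*p2 + m^Suc n*b*q2)"
  proof -
    have e: "ma N * p1 + mb N * p2 = l * p1" "mc N * p1 + md N * p2 = l * p2"
        "ma N * q1 + mb N * q2 = m * q1" "mc N * q1 + md N * q2 = m * q2"
      using assms(1,2) by (auto simp: eig_simp)
    have "ma N * (l^n*a*p1 + m^n*b*q1) + mb N * (l^n*a*p2 + m^n*b*q2) = l^n*a*(ma N * p1 + mb N * p2) + m^n*b*(ma N * q1 + mb N * q2)"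
      by (simp add: algebra_simps)
    moreover have "mc N * (l^n*a*p1 + m^n*b*q1) + md N * (l^n*a*p2 + m^n*b*q2) = l^n*a*(mc N * p1 + md N * p2) + m^n*b*(mc N * q1 + md N * q2)"
      by (simp add: algebra_simps)
    ultimately show ?thesis unfolding e by (simp add: algebra_simps)
  qed
  finally show ?case .
qed

lemma ev_ex: "eventually P sequentially \<Longrightarrow> \<exists>n. P n"
  unfolding eventually_sequentially by auto

lemma bconv_unique: assumes "bconv s p" "bconv s p'" shows "p = p'"
proof (cases p; cases p')
  fix r r' assume pr: "p = Some r" "p' = Some r'"
  show ?thesis
  proof (rule ccontr)
    assume "p \<noteq> p'"
    then have ne: "r \<noteq> r'" using pr by auto
    define e where "e = \<bar>r - r'\<bar> / 2"
    have e: "e > 0" using ne e_def by auto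
    have h1: "\<forall>\<^sub>F n in sequentially. \<exists>y. s n = Some y \<and> \<bar>y - r\<bar> < e"
      using assms(1) pr e unfolding bconv_def by simp
    have h2: "\<forall>\<^sub>F n in sequentially. \<exists>y. s n = Some y \<and> \<bar>y - r'\<bar> < e"
      using assms(2) pr e unfolding bconv_def by simp
    obtain n where "(\<exists>y. s n = Some y \<and> \<bar>y - r\<bar> < e) \<and> (\<exists>y. s n = Some y \<and> \<bar>y - r'\<bar> < e)"
      using ev_ex[OF eventually_conj[OF h1 h2]] by blast
    then obtain y where "\<bar>y - r\<bar> < e" "\<bar>y - r'\<bar> < e" by auto
    then show False unfolding e_def by (smt (verit) abs_triangle_ineq field_sum_of_halves)
  qed
next
  fix r assume pr: "p = Some r" "p' = None"
  have h1: "\<forall>\<^sub>F n in sequentially. \<exists>y. s n = Some y \<and> \<bar>y - r\<bar> < 1"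
    using assms(1) pr unfolding bconv_def by simp
  have h2: "\<forall>\<^sub>F n in sequentially. s n = None \<or> (\<exists>y. s n = Some y \<and> \<bar>y\<bar> > \<bar>r\<bar> + 1)"
    using assms(2) pr unfolding bconv_def by simp
  obtain n where "(\<exists>y. s n = Some y \<and> \<bar>y - r\<bar> < 1) \<and> (s n = None \<or> (\<exists>y. s n = Some y \<and> \<bar>y\<bar> > \<bar>r\<bar> + 1))"
    using ev_ex[OF eventually_conj[OF h1 h2]] by blast
  then show ?thesis by auto
next
  fix r assume pr: "p = None" "p' = Some r"
  have h1: "\<forall>\<^sub>F n in sequentially. \<exists>y. s n = Some y \<and> \<bar>y - r\<bar> < 1"
    using assms(2) pr unfolding bconv_def by simp
  have h2: "\<forall>\<^sub>F n in sequentially. s n = None \<or> (\<exists>y. s n = Some y \<and> \<bar>y\<bar> > \<bar>r\<bar> + 1)"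
    using assms(1) pr unfolding bconv_def by simp
  obtain n where "(\<exists>y. s n = Some y \<and> \<bar>y - r\<bar> < 1) \<and> (s n = None \<or> (\<exists>y. s n = Some y \<and> \<bar>y\<bar> > \<bar>r\<bar> + 1))"
    using ev_ex[OF eventually_conj[OF h1 h2]] by blast
  then show ?thesis by auto
next
  assume "p = None" "p' = None" then show ?thesis by simp
qed

lemma bconv_Some: "bconv s (Some r) \<longleftrightarrow> (\<forall>e>0. \<forall>\<^sub>F n in sequentially. \<exists>y. s n = Some y \<and> \<bar>y - r\<bar> < e)"
  by (simp add: bconv_def)
lemma bconv_None: "bconv s None \<longleftrightarrow> (\<forall>M. \<forall>\<^sub>F n in sequentially. s n = None \<or> (\<exists>y. s n = Some y \<and> \<bar>y\<bar> > M))"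
  by (simp add: bconv_def)

lemma bconv_pj:
  assumes f: "f \<longlonglongrightarrow> x1" and g: "g \<longlonglongrightarrow> x2" and nz: "(x1, x2) \<noteq> (0,0)"
  shows "bconv (\<lambda>n. pj (f n, g n)) (pj (x1, x2))"
proof (cases "x2 = 0")
  case False
  have ev: "\<forall>\<^sub>F n in sequentially. g n \<noteq> 0"
    using g False tendsto_imp_eventually_ne by blast
  have d: "(\<lambda>n. f n / g n) \<longlonglongrightarrow> x1 / x2"
    using f g False by (intro tendsto_divide) auto
  have "\<forall>e>0. \<forall>\<^sub>F n in sequentially. \<exists>y. pj (f n, g n) = Some y \<and> \<bar>y - x1/x2\<bar> < e"
  proof (intro allI impI)
    fix e :: real assume e: "0 < e"
    have "\<forall>\<^sub>F n in sequentially. dist (f n / g n) (x1 / x2) < e"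
      using d e by (simp add: tendsto_iff)
    then show "\<forall>\<^sub>F n in sequentially. \<exists>y. pj (f n, g n) = Some y \<and> \<bar>y - x1/x2\<bar> < e"
      using ev by eventually_elim (auto simp: dist_real_def)
  qed
  note h = this
  have e: "pj (x1, x2) = Some (x1/x2)" using False by simp
  show ?thesis unfolding e bconv_Some by (rule h)
next
  case True
  then have x1: "x1 \<noteq> 0" using nz by auto
  have "\<forall>M. \<forall>\<^sub>F n in sequentially. pj (f n, g n) = None \<or> (\<exists>y. pj (f n, g n) = Some y \<and> \<bar>y\<bar> > M)"
  proof (intro allI)
    fix M :: real
    define c where "c = \<bar>x1\<bar> / (2 * (\<bar>M\<bar> + 1))"
    have c: "c > 0" using x1 c_def by (simp add: divide_pos_pos)
    have ev1: "\<forall>\<^sub>F n in sequentially. \<bar>f n\<bar> > \<bar>x1\<bar> / 2"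
    proof -
      have "(\<lambda>n. \<bar>f n\<bar>) \<longlonglongrightarrow> \<bar>x1\<bar>" using f by (rule tendsto_rabs)
      moreover have "\<bar>x1\<bar> / 2 < \<bar>x1\<bar>" using x1 by simp
      ultimately show ?thesis using order_tendstoD(1) by blast
    qed
    have ev2: "\<forall>\<^sub>F n in sequentially. \<bar>g n\<bar> < c"
    proof -
      have "(\<lambda>n. \<bar>g n\<bar>) \<longlonglongrightarrow> 0" using g True tendsto_rabs by fastforce
      then show ?thesis using order_tendstoD(2) c by blast
    qed
    show "\<forall>\<^sub>F n in sequentially. pj (f n, g n) = None \<or> (\<exists>y. pj (f n, g n) = Some y \<and> \<bar>y\<bar> > M)"
      using ev1 ev2
    proof eventually_elim
      case (elim n)
      show ?case
      proof (cases "g n = 0")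
        case False
        have "\<bar>f n / g n\<bar> = \<bar>f n\<bar> / \<bar>g n\<bar>" by (simp add: abs_divide)
        also have "\<dots> > (\<bar>x1\<bar> / 2) / c"
        proof -
          have "(\<bar>x1\<bar> / 2) / c < \<bar>f n\<bar> / c" using elim c by (intro divide_strict_right_mono) auto
          also have "\<dots> \<le> \<bar>f n\<bar> / \<bar>g n\<bar>" using elim c False
            by (intro divide_left_mono) auto
          finally show ?thesis .
        qed
        moreover have "(\<bar>x1\<bar> / 2) / c = \<bar>M\<bar> + 1" using x1 unfolding c_def by (simp add: field_simps)
        ultimately show ?thesis using False by auto
      qed simp
    qed
  qed
  note h = this
  have e: "pj (x1, x2) = None" using True by simp
  show ?thesis unfolding e bconv_None by (rule h)
qed



lemma decomp:
  assumes "brk (p1,p2) (q1,q2) \<noteq> 0"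
  shows "\<exists>a b. z1 = a*p1 + b*q1 \<and> z2 = a*p2 + b*q2"
proof -
  let ?D = "p1*q2 - p2*q1"
  have D: "?D \<noteq> 0" using assms by simp
  have e1: "(z1*q2 - z2*q1) / ?D * p1 + (p1*z2 - p2*z1) / ?D * q1 = ((z1*q2 - z2*q1) * p1 + (p1*z2 - p2*z1) * q1) / ?D"
    by (simp add: add_divide_distrib)
  also have "\<dots> = z1 * ?D / ?D" by (simp add: algebra_simps)
  also have "\<dots> = z1" using D by simp
  finally have 1: "(z1*q2 - z2*q1) / ?D * p1 + (p1*z2 - p2*z1) / ?D * q1 = z1" .
  have e2: "(z1*q2 - z2*q1) / ?D * p2 + (p1*z2 - p2*z1) / ?D * q2 = ((z1*q2 - z2*q1) * p2 + (p1*z2 - p2*z1) * q2) / ?D"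
    by (simp add: add_divide_distrib)
  also have "\<dots> = z2 * ?D / ?D" by (simp add: algebra_simps)
  also have "\<dots> = z2" using D by simp
  finally have 2: "(z1*q2 - z2*q1) / ?D * p2 + (p1*z2 - p2*z1) / ?D * q2 = z2" .
  show ?thesis using 1 2 by metis
qed

lemma attr_eig:
  assumes ep: "eig N (p1,p2) l" and eq: "eig N (q1,q2) m" and D: "brk (p1,p2) (q1,q2) \<noteq> 0"
    and m: "0 < m" "m < l"
  shows "attr N = pj (p1,p2)"
proof -
  have l: "l > 0" "l \<noteq> 0" "m \<noteq> 0" using m by auto
  have pnz: "(p1,p2) \<noteq> (0,0)" and qnz: "(q1,q2) \<noteq> (0,0)" using ep eq by (auto simp: eig_def)
  have fixp: "bact N (pj (p1,p2)) = pj (p1,p2)"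
    using bact_pj[OF pnz] ep pj_sc[of l "(p1,p2)"] l by (simp add: eig_def)
  have fixq: "bact N (pj (q1,q2)) = pj (q1,q2)"
    using bact_pj[OF qnz] eq pj_sc[of m "(q1,q2)"] l by (simp add: eig_def)
  have conv: "bconv (\<lambda>n. (bact N ^^ n) x) (pj (p1,p2))" if nf: "\<not> bfixed N x" for x
  proof -
    obtain z where z: "z \<noteq> (0,0)" "x = pj z" using pj_surj by blast
    obtain z1 z2 where zz: "z = (z1,z2)" by (cases z)
    obtain a b where ab: "z1 = a*p1 + b*q1" "z2 = a*p2 + b*q2" using decomp[OF D] by blast
    have abnz: "(a,b) \<noteq> (0,0)" using z zz ab by auto
    have a: "a \<noteq> 0"
    proof
      assume "a = 0"
      then have "z = sc b (q1,q2)" "b \<noteq> 0" using zz ab abnz by auto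
      then have "x = pj (q1,q2)" using z pj_sc by simp
      then show False using nf fixq by (simp add: bfixed_def)
    qed
    have orb: "(bact N ^^ n) x = pj (a*p1 + (m/l)^n*b*q1, a*p2 + (m/l)^n*b*q2)" for n
    proof -
      have "(bact N ^^ n) x = pj (l^n*a*p1 + m^n*b*q1, l^n*a*p2 + m^n*b*q2)"
        using orbit[OF ep eq D abnz l(2) l(3)] z zz ab by simp
      also have "(l^n*a*p1 + m^n*b*q1, l^n*a*p2 + m^n*b*q2) = sc (l^n) (a*p1 + (m/l)^n*b*q1, a*p2 + (m/l)^n*b*q2)"
        using l by (simp add: algebra_simps power_divide)
      also have "pj \<dots> = pj (a*p1 + (m/l)^n*b*q1, a*p2 + (m/l)^n*b*q2)"
        using l by (intro pj_sc) simp
      finally show ?thesis .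
    qed
    have lim0: "(\<lambda>n. (m/l)^n) \<longlonglongrightarrow> 0"
      using m by (intro LIMSEQ_power_zero) auto
    have t1: "(\<lambda>n. a*p1 + (m/l)^n*b*q1) \<longlonglongrightarrow> a*p1 + 0*b*q1"
      by (intro tendsto_intros lim0)
    have t2: "(\<lambda>n. a*p2 + (m/l)^n*b*q2) \<longlonglongrightarrow> a*p2 + 0*b*q2"
      by (intro tendsto_intros lim0)
    have nz: "(a*p1 + 0*b*q1, a*p2 + 0*b*q2) \<noteq> (0,0)" using a pnz by auto
    have "bconv (\<lambda>n. pj (a*p1 + (m/l)^n*b*q1, a*p2 + (m/l)^n*b*q2)) (pj (a*p1 + 0*b*q1, a*p2 + 0*b*q2))"
      by (rule bconv_pj[OF t1 t2 nz])
    moreover have "pj (a*p1 + 0*b*q1, a*p2 + 0*b*q2) = pj (p1,p2)"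
      using pj_sc[OF a, of "(p1,p2)"] by simp
    ultimately show ?thesis unfolding orb by simp
  qed
  define x0 where "x0 = pj (p1 + q1, p2 + q2)"
  have x0nf: "\<not> bfixed N x0"
  proof
    assume "bfixed N x0"
    have nz0: "(1*p1 + 1*q1, 1*p2 + 1*q2) \<noteq> (0,0)" using lin_nz[OF D, of 1 1] by simp
    have nz0': "(p1 + q1, p2 + q2) \<noteq> (0,0)" using nz0 by simp
    have "bact N x0 = pj (mv N (1*p1 + 1*q1, 1*p2 + 1*q2))" unfolding x0_def using bact_pj[OF nz0] by simp
    also have "mv N (1*p1 + 1*q1, 1*p2 + 1*q2) = (l*p1 + m*q1, l*p2 + m*q2)"
      using ep eq by (simp add: eig_simp algebra_simps)
    finally have "pj (l*p1 + m*q1, l*p2 + m*q2) = pj (p1 + q1, p2 + q2)"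
      using \<open>bfixed N x0\<close> unfolding bfixed_def x0_def by simp
    moreover have nzl: "(l*p1 + m*q1, l*p2 + m*q2) \<noteq> (0,0)" using lin_nz[OF D, of l m] l by simp
    ultimately have "brk (l*p1 + m*q1, l*p2 + m*q2) (p1 + q1, p2 + q2) = 0"
      using pj_eq[OF nzl nz0'] by blast
    moreover have "brk (l*p1 + m*q1, l*p2 + m*q2) (p1 + q1, p2 + q2) = (l - m) * (p1*q2 - p2*q1)"
      by (simp add: algebra_simps)
    ultimately show False using D m by simp
  qed
  show ?thesis unfolding attr_def
  proof (rule the_equality)
    show "bfixed N (pj (p1, p2)) \<and> (\<forall>x. \<not> bfixed N x \<longrightarrow> bconv (\<lambda>n. (bact N ^^ n) x) (pj (p1, p2)))"
      using fixp conv by (simp add: bfixed_def)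
  next
    fix P assume "bfixed N P \<and> (\<forall>x. \<not> bfixed N x \<longrightarrow> bconv (\<lambda>n. (bact N ^^ n) x) P)"
    then have "bconv (\<lambda>n. (bact N ^^ n) x0) P" using x0nf by blast
    then show "P = pj (p1,p2)" using conv[OF x0nf] bconv_unique by blast
  qed
qed



lemma eigvec:
  assumes det: "ma M * md M - mb M * mc M = 1" and mu: "mu^2 - (ma M + md M) * mu + 1 = 0"
    and t: "(ma M + md M)^2 \<noteq> 4"
  shows "\<exists>v1 v2. eig M (v1,v2) mu"
proof (cases "mb M \<noteq> 0 \<or> mu \<noteq> ma M")
  case True
  show ?thesis
    apply (rule exI[of _ "mb M"], rule exI[of _ "mu - ma M"])
    using True det mu by (simp add: eig_simp power2_eq_square algebra_simps)
next
  case False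
  then have b: "mb M = 0" "mu = ma M" by auto
  have nz: "(ma M - md M, mc M) \<noteq> (0,0)"
  proof
    assume "(ma M - md M, mc M) = (0,0)"
    then have "ma M = md M" "mc M = 0" by auto
    then have "ma M * ma M = 1" using det b by simp
    then have "(ma M + md M)^2 = 4" using \<open>ma M = md M\<close> by (simp add: power2_eq_square algebra_simps)
    then show False using t by simp
  qed
  show ?thesis
    apply (rule exI[of _ "ma M - md M"], rule exI[of _ "mc M"])
    using nz b by (simp add: eig_simp algebra_simps)
qed

lemma par:
  assumes "brk (p1,p2) (q1,q2) = 0" "(p1,p2) \<noteq> (0,0)"
  shows "\<exists>k. q1 = k * p1 \<and> q2 = k * p2"
proof (cases "p1 = 0")
  case True
  then have "p2 \<noteq> 0" using assms by auto
  then show ?thesis using assms True by (intro exI[of _ "q2/p2"]) (auto simp: field_simps)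
next
  case False
  then show ?thesis using assms by (intro exI[of _ "q1/p1"]) (auto simp: field_simps)
qed

lemma eig_indep:
  assumes "eig M (p1,p2) l" "eig M (q1,q2) m" "l \<noteq> m"
  shows "brk (p1,p2) (q1,q2) \<noteq> 0"
proof
  assume h: "brk (p1,p2) (q1,q2) = 0"
  have pnz: "(p1,p2) \<noteq> (0,0)" and qnz: "(q1,q2) \<noteq> (0,0)" using assms by (auto simp: eig_def)
  obtain k where k: "q1 = k*p1" "q2 = k*p2" using par[OF h pnz] by blast
  have e: "ma M * p1 + mb M * p2 = l * p1" "mc M * p1 + md M * p2 = l * p2"
       "ma M * q1 + mb M * q2 = m * q1" "mc M * q1 + md M * q2 = m * q2"
    using assms by (auto simp: eig_simp)
  have "m*q1 = ma M * q1 + mb M * q2" using e(3) by simp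
  also have "\<dots> = k*(ma M * p1 + mb M * p2)" using k by (simp add: algebra_simps)
  also have "\<dots> = l*q1" unfolding e(1) using k by simp
  finally have 1: "m * q1 = l * q1" .
  have "m*q2 = mc M * q1 + md M * q2" using e(4) by simp
  also have "\<dots> = k*(mc M * p1 + md M * p2)" using k by (simp add: algebra_simps)
  also have "\<dots> = l*q2" unfolding e(2) using k by simp
  finally have 2: "m * q2 = l * q2" .
  from 1 2 have "m * q1 = l * q1" "m * q2 = l * q2" by auto
  then have "q1 = 0" "q2 = 0" using assms(3) by auto
  then show False using qnz by simp
qed

lemma eig_exists:
  assumes "SL2R M" "trace M > 2"
  shows "\<exists>p1 p2 q1 q2 l. l > 1 \<and> eig M (p1,p2) l \<and> eig M (q1,q2) (1/l)
           \<and> brk (p1,p2) (q1,q2) \<noteq> 0 \<and> trace M = l + 1/l"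
proof -
  define t where "t = ma M + md M"
  have det: "ma M * md M - mb M * mc M = 1" using assms(1) by (simp add: SL2R_def det_entries)
  have t2: "t > 2" using assms(2) by (simp add: t_def trace_entries)
  define s where "s = sqrt (t^2 - 4)"
  have t4: "t^2 - 4 > 0"
  proof -
    have "t^2 - 4 = (t - 2) * (t + 2)" by (simp add: power2_eq_square algebra_simps)
    moreover have "(t - 2) * (t + 2) > 0" using t2 by (intro mult_pos_pos) auto
    ultimately show ?thesis by simp
  qed
  have s: "s > 0" "s^2 = t^2 - 4" using t4 unfolding s_def by auto
  define l where "l = (t + s)/2"
  define m where "m = (t - s)/2"
  have lm: "l * m = 1" unfolding l_def m_def using s by (simp add: field_simps power2_eq_square algebra_simps)
  have l1: "l > 1" using t2 s unfolding l_def by simp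
  have m: "m = 1/l" using lm l1 by (simp add: field_simps)
  have tlm: "t = l + m" unfolding l_def m_def by (simp add: field_simps)
  have tt: "(ma M + md M)^2 \<noteq> 4" using t4 unfolding t_def by simp
  have el: "l^2 - (ma M + md M) * l + 1 = 0" using tlm lm unfolding t_def by (simp add: power2_eq_square algebra_simps)
  have em: "m^2 - (ma M + md M) * m + 1 = 0" using tlm lm unfolding t_def by (simp add: power2_eq_square algebra_simps)
  obtain p1 p2 where p: "eig M (p1,p2) l" using eigvec[OF det el tt] by blast
  obtain q1 q2 where q: "eig M (q1,q2) m" using eigvec[OF det em tt] by blast
  have "l * l > 1" using l1 by (simp add: less_1_mult)
  then have lnm: "l \<noteq> m" using lm by auto
  show ?thesis
    apply (rule exI[of _ p1], rule exI[of _ p2], rule exI[of _ q1], rule exI[of _ q2], rule exI[of _ l])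
    using l1 p q m eig_indep[OF p q lnm] tlm unfolding t_def by (simp add: trace_entries)
qed

lemma inv_props:
  assumes "det (M::real^2^2) \<noteq> 0"
  shows "matrix_inv M ** M = mat 1 \<and> M ** matrix_inv M = mat 1"
proof -
  have "invertible M" using assms invertible_det_nz by blast
  then have "\<exists>A'. M ** A' = mat 1 \<and> A' ** M = mat 1" unfolding invertible_def by blast
  then have "M ** matrix_inv M = mat 1 \<and> matrix_inv M ** M = mat 1"
    unfolding matrix_inv_def by (rule someI_ex)
  then show ?thesis by simp
qed

lemma repel_eig:
  assumes "SL2R M" and ep: "eig M (p1,p2) l" and eq: "eig M (q1,q2) (1/l)" and D: "brk (p1,p2) (q1,q2) \<noteq> 0"
    and l: "l > 1"
  shows "repel M = pj (q1,q2)"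
proof -
  define N where "N = matrix_inv M"
  have "N ** M = mat 1" using inv_props[of M] assms(1) unfolding N_def SL2R_def by simp
  then have i: "ma N * ma M + mb N * mc M = 1" "ma N * mb M + mb N * md M = 0"
      "mc N * ma M + md N * mc M = 0" "mc N * mb M + md N * md M = 1"
    by (metis entries_mult mat1_entries)+
  have bk: "mv N (mv M (x,y)) = (x,y)" for x y
  proof -
    have "ma N * (ma M * x + mb M * y) + mb N * (mc M * x + md M * y) = (ma N * ma M + mb N * mc M) * x + (ma N * mb M + mb N * md M) * y"
      by (simp add: algebra_simps)
    moreover have "mc N * (ma M * x + mb M * y) + md N * (mc M * x + md M * y) = (mc N * ma M + md N * mc M) * x + (mc N * mb M + md N * md M) * y"
      by (simp add: algebra_simps)
    ultimately show ?thesis using i by simp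
  qed
  have ep': "mv M (p1,p2) = (l*p1, l*p2)" and eq': "mv M (q1,q2) = (q1/l, q2/l)" using ep eq by (auto simp: eig_def)
  have lin: "mv N (k*x, k*y) = (k * fst (mv N (x,y)), k * snd (mv N (x,y)))" for k x y
    by (simp add: algebra_simps)
  have "mv N (q1/l, q2/l) = (q1, q2)" using bk[of q1 q2] eq' by simp
  then have "(1/l) * fst (mv N (q1,q2)) = q1" "(1/l) * snd (mv N (q1,q2)) = q2"
    using lin[of "1/l" q1 q2] by auto
  then have nq: "mv N (q1,q2) = (l*q1, l*q2)" using l by (cases "mv N (q1,q2)") (auto simp: field_simps)
  have "mv N (l*p1, l*p2) = (p1, p2)" using bk[of p1 p2] ep' by simp
  then have "l * fst (mv N (p1,p2)) = p1" "l * snd (mv N (p1,p2)) = p2"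
    using lin[of l p1 p2] by auto
  then have np: "mv N (p1,p2) = (p1/l, p2/l)" using l by (cases "mv N (p1,p2)") (auto simp: field_simps)
  have e1: "eig N (q1,q2) l" using nq eq by (simp add: eig_def)
  have e2: "eig N (p1,p2) (1/l)" using np ep by (simp add: eig_def)
  have D': "brk (q1,q2) (p1,p2) \<noteq> 0" using D by (simp add: algebra_simps)
  have "1/l < l" using l by (smt (verit) divide_less_eq_1_pos)
  moreover have "0 < 1/l" using l by simp
  ultimately have "attr N = pj (q1,q2)" using attr_eig[OF e1 e2 D'] by blast
  then show ?thesis unfolding repel_def N_def .
qed

lemma entries_eig:
  assumes ep: "eig M (p1,p2) l" and eq: "eig M (q1,q2) m"
  shows "ma M * (p1*q2 - p2*q1) = l*p1*q2 - m*p2*q1"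
    "mb M * (p1*q2 - p2*q1) = (m - l)*p1*q1"
    "mc M * (p1*q2 - p2*q1) = (l - m)*p2*q2"
    "md M * (p1*q2 - p2*q1) = m*p1*q2 - l*p2*q1"
proof -
  have e: "ma M * p1 + mb M * p2 = l * p1" "mc M * p1 + md M * p2 = l * p2"
       "ma M * q1 + mb M * q2 = m * q1" "mc M * q1 + md M * q2 = m * q2"
    using assms by (auto simp: eig_simp)
  have "ma M * (p1*q2 - p2*q1) = q2 * (ma M * p1 + mb M * p2) - p2 * (ma M * q1 + mb M * q2)" by (simp add: algebra_simps)
  also have "\<dots> = l*p1*q2 - m*p2*q1" unfolding e by (simp add: algebra_simps)
  finally show "ma M * (p1*q2 - p2*q1) = l*p1*q2 - m*p2*q1" .
  have "mb M * (p1*q2 - p2*q1) = p1 * (ma M * q1 + mb M * q2) - q1 * (ma M * p1 + mb M * p2)" by (simp add: algebra_simps)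
  also have "\<dots> = (m - l)*p1*q1" unfolding e by (simp add: algebra_simps)
  finally show "mb M * (p1*q2 - p2*q1) = (m - l)*p1*q1" .
  have "mc M * (p1*q2 - p2*q1) = q2 * (mc M * p1 + md M * p2) - p2 * (mc M * q1 + md M * q2)" by (simp add: algebra_simps)
  also have "\<dots> = (l - m)*p2*q2" unfolding e by (simp add: algebra_simps)
  finally show "mc M * (p1*q2 - p2*q1) = (l - m)*p2*q2" .
  have "md M * (p1*q2 - p2*q1) = p1 * (mc M * q1 + md M * q2) - q1 * (mc M * p1 + md M * p2)" by (simp add: algebra_simps)
  also have "\<dots> = m*p1*q2 - l*p2*q1" unfolding e by (simp add: algebra_simps)
  finally show "md M * (p1*q2 - p2*q1) = m*p1*q2 - l*p2*q1" .
qed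



lemma hdist_arg:
  fixes a b c d x y :: real
  assumes det: "a * d - b * c = 1" and y: "y > 0"
  defines "z \<equiv> Complex x y"
  defines "w \<equiv> of_real c * z + of_real d"
  defines "Q \<equiv> of_real c * z^2 + of_real (d - a) * z - of_real b"
  shows "1 + (cmod (z - (of_real a * z + of_real b) / w))\<^sup>2 / (2 * Im z * Im ((of_real a * z + of_real b) / w))
     = ((a + d)^2 / 2 - 1) + ((c*(x^2 - y^2) + (d - a)*x - b) / y + 2*c*y)^2 / 2"
proof -
  have wnz: "w \<noteq> 0"
  proof
    assume "w = 0"
    then have "c * y = 0" "c * x + d = 0" unfolding w_def z_def by (simp_all add: complex_eq_iff)
    then have "c = 0" "d = 0" using y by auto
    then show False using det by simp
  qed
  have N: "(cmod w)^2 > 0" using wnz by simp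
  have e1: "z - (of_real a * z + of_real b) / w = Q / w"
    using wnz unfolding Q_def w_def by (simp add: field_simps power2_eq_square)
  have e2: "Im ((of_real a * z + of_real b) / w) = y / (cmod w)^2"
  proof -
    have "Im ((of_real a * z + of_real b) / w) = (Im (of_real a * z + of_real b) * Re w - Re (of_real a * z + of_real b) * Im w) / (cmod w)^2"
      by (rule Im_divide')
    also have "Im (of_real a * z + of_real b) * Re w - Re (of_real a * z + of_real b) * Im w = y * (a*d - b*c)"
      unfolding w_def z_def by (simp add: algebra_simps)
    finally show ?thesis using det by simp
  qed
  have e3: "(cmod (Q / w))^2 = (cmod Q)^2 / (cmod w)^2" by (simp add: norm_divide power_divide)
  have ReQ: "Re Q = c*(x^2 - y^2) + (d - a)*x - b" unfolding Q_def z_def by (simp add: power2_eq_square algebra_simps)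
  have ImQ: "Im Q = y * (2*c*x + d - a)" unfolding Q_def z_def by (simp add: power2_eq_square algebra_simps)
  have "1 + (cmod (Q / w))\<^sup>2 / (2 * y * (y / (cmod w)^2)) = 1 + (cmod Q)^2 / (2 * y^2)"
    unfolding e3 using N y wnz by (simp add: field_simps power2_eq_square)
  also have "(cmod Q)^2 = (Re Q)^2 + (Im Q)^2" by (rule cmod_power2)
  also have "1 + ((Re Q)^2 + (Im Q)^2) / (2 * y^2) = ((a + d)^2 / 2 - 1) + ((Re Q) / y + 2*c*y)^2 / 2"
  proof -
    have key': "(Im Q)^2 = y^2 * ((a+d)^2 - 4 * (a * d - b * c)) + 4 * c * y^2 * (Re Q + c * y^2)"
      unfolding ReQ ImQ by (simp add: power2_eq_square algebra_simps)
    have key: "(Im Q)^2 = y^2 * ((a+d)^2 - 4) + 4 * c * y^2 * (Re Q + c * y^2)"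
      using key' det by simp
    show ?thesis unfolding key using y by (simp add: field_simps power2_eq_square)
  qed
  finally show ?thesis unfolding e1 e2 ReQ using z_def by simp
qed

lemma hdist_val:
  assumes "SL2R M" "Im z > 0"
  shows "hdist z (mact M z) = arcosh (((trace M)^2 / 2 - 1) + ((mc M*((Re z)^2 - (Im z)^2) + (md M - ma M)*Re z - mb M) / Im z + 2*mc M*Im z)^2 / 2)"
proof -
  have det: "ma M * md M - mb M * mc M = 1" using assms(1) by (simp add: SL2R_def det_entries)
  show ?thesis
    unfolding hdist_def mact_def trace_entries
    using hdist_arg[OF det assms(2), of "Re z", unfolded complex.collapse] by (rule arg_cong[where f=arcosh])
qed

lemma arcosh_mono: "1 \<le> x \<Longrightarrow> x \<le> y \<Longrightarrow> arcosh x \<le> arcosh (y::real)"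
  by (cases "x = y") (auto intro: less_imp_le arcosh_real_strict_mono)

lemma tlen_formula:
  assumes "SL2R M" "(trace M)^2 > 4"
  shows "tlen M = arcosh ((trace M)^2 / 2 - 1)"
proof -
  define a b c d where "a = ma M" "b = mb M" "c = mc M" "d = md M"
  define t where "t = trace M"
  have det: "a * d - b * c = 1" using assms(1) unfolding a_b_c_d_def by (simp add: SL2R_def det_entries)
  have t: "t = a + d" unfolding t_def a_b_c_d_def by (simp add: trace_entries)
  have t4: "t^2 > 4" using assms(2) t_def by simp
  have ge1: "1 \<le> t^2/2 - 1" using t4 by simp
  have lb: "arcosh (t^2/2 - 1) \<le> hdist z (mact M z)" if "z \<in> uhp" for z
  proof -
    have y: "Im z > 0" using that by (simp add: uhp_def)
    have "hdist z (mact M z) = arcosh ((t^2 / 2 - 1) + ((c*((Re z)^2 - (Im z)^2) + (d - a)*Re z - b) / Im z + 2*c*Im z)^2 / 2)"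
      using hdist_val[OF assms(1) y] unfolding t_def a_b_c_d_def .
    moreover have "t^2/2 - 1 \<le> (t^2 / 2 - 1) + ((c*((Re z)^2 - (Im z)^2) + (d - a)*Re z - b) / Im z + 2*c*Im z)^2 / 2"
      by simp
    ultimately show ?thesis using ge1 arcosh_mono by simp
  qed
  obtain z0 where z0: "z0 \<in> uhp" "c*((Re z0)^2 + (Im z0)^2) + (d - a)*Re z0 - b = 0"
  proof (cases "c = 0")
    case True
    have "a \<noteq> d"
    proof
      assume "a = d"
      then have "a * a = 1" using det True by simp
      then have "t^2 = 4" using t \<open>a = d\<close> by (simp add: power2_eq_square algebra_simps)
      then show False using t4 by simp
    qed
    then have "(d - a) * (b / (d - a)) - b = 0" by simp
    then show ?thesis using True by (intro that[of "Complex (b / (d - a)) 1"]) (auto simp: uhp_def)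
  next
    case False
    define y0 where "y0 = sqrt (t^2 - 4) / (2 * \<bar>c\<bar>)"
    define x0 where "x0 = (a - d)/(2*c)"
    have y0: "y0 > 0" using t4 False unfolding y0_def by simp
    have s2: "(sqrt (t^2 - 4))^2 = t^2 - 4" using t4 by simp
    have y02: "4 * c^2 * y0^2 = t^2 - 4" unfolding y0_def power_divide power_mult_distrib power2_abs s2
      using False by simp
    have x0: "2 * c * x0 = a - d" unfolding x0_def using False by simp
    have "4*c*(c*(x0^2 + y0^2) + (d - a)*x0 - b) = (2*c*x0)^2 + 4*c^2*y0^2 - 2 * (a - d) * (2*c*x0) - 4*b*c"
      by (simp add: power2_eq_square algebra_simps)
    also have "\<dots> = (a-d)^2 + (t^2 - 4) - 2*(a-d)*(a-d) - 4*b*c" unfolding x0 y02 ..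
    also have "\<dots> = 4 * (a*d - b*c) - 4" unfolding t by (simp add: power2_eq_square algebra_simps)
    also have "\<dots> = 0" using det by simp
    finally have "c*(x0^2 + y0^2) + (d - a)*x0 - b = 0" using False by simp
    then show ?thesis using y0 by (intro that[of "Complex x0 y0"]) (auto simp: uhp_def)
  qed
  have v0: "hdist z0 (mact M z0) = arcosh (t^2/2 - 1)"
  proof -
    have y: "Im z0 > 0" using z0 by (simp add: uhp_def)
    have "(c*((Re z0)^2 - (Im z0)^2) + (d - a)*Re z0 - b) / Im z0 + 2*c*Im z0
        = (c*((Re z0)^2 + (Im z0)^2) + (d - a)*Re z0 - b) / Im z0"
      using y by (simp add: field_simps power2_eq_square)
    also have "\<dots> = 0" using z0 by simp
    finally show ?thesis using hdist_val[OF assms(1) y] unfolding t_def a_b_c_d_def by simp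
  qed
  have "tlen M = arcosh (t^2/2 - 1)" unfolding tlen_def
  proof (rule cInf_eq_minimum)
    show "arcosh (t^2/2 - 1) \<in> (\<lambda>z. hdist z (mact M z)) ` uhp" using v0 z0 by force
  next
    fix x assume "x \<in> (\<lambda>z. hdist z (mact M z)) ` uhp"
    then show "arcosh (t^2/2 - 1) \<le> x" using lb by auto
  qed
  then show ?thesis unfolding t_def .
qed



lemma cmod_eq_iff:
  assumes "R \<ge> 0"
  shows "cmod (z - of_real c) = R \<longleftrightarrow> (Re z - c)^2 + (Im z)^2 = R^2"
proof -
  have "cmod (z - of_real c) = R \<longleftrightarrow> (cmod (z - of_real c))^2 = R^2"
    using assms by (simp add: power2_eq_iff_nonneg)
  also have "(cmod (z - of_real c))^2 = (Re z - c)^2 + (Im z)^2" by (simp add: cmod_power2)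
  finally show ?thesis .
qed

lemma geod_pj:
  assumes D: "brk (p1,p2) (q1,q2) \<noteq> 0"
  shows "geodesic (pj (p1,p2)) (pj (q1,q2)) =
     {z. Im z > 0 \<and> p2*q2*((Re z)^2 + (Im z)^2) - (p1*q2 + q1*p2)*Re z + p1*q1 = 0}"
proof -
  have pnz: "(p1,p2) \<noteq> (0,0)" and qnz: "(q1,q2) \<noteq> (0,0)" using D by auto
  obtain k r where k: "k \<noteq> 0" "((p1,p2) = (k*r, k) \<and> pj (p1,p2) = Some r) \<or> ((p1,p2) = (k, 0) \<and> pj (p1,p2) = None)"
    using pj_norm[OF pnz] by blast
  obtain k' r' where k': "k' \<noteq> 0" "((q1,q2) = (k'*r', k') \<and> pj (q1,q2) = Some r') \<or> ((q1,q2) = (k', 0) \<and> pj (q1,q2) = None)"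
    using pj_norm[OF qnz] by blast
  have kk: "k * k' \<noteq> 0" using k k' by simp
  show ?thesis
  proof (rule set_eqI)
    fix z :: complex
    define x y where "x = Re z" "y = Im z"
    consider (FF) "p1 = k*r" "p2 = k" "pj (p1,p2) = Some r" "q1 = k'*r'" "q2 = k'" "pj (q1,q2) = Some r'"
      | (FI) "p1 = k*r" "p2 = k" "pj (p1,p2) = Some r" "q1 = k'" "q2 = 0" "pj (q1,q2) = None"
      | (IF) "p1 = k" "p2 = 0" "pj (p1,p2) = None" "q1 = k'*r'" "q2 = k'" "pj (q1,q2) = Some r'"
      | (II) "p1 = k" "p2 = 0" "q1 = k'" "q2 = 0"
      using k(2) k'(2) by auto
    then show "z \<in> geodesic (pj (p1,p2)) (pj (q1,q2)) \<longleftrightarrow> z \<in> {z. Im z > 0 \<and> p2*q2*((Re z)^2 + (Im z)^2) - (p1*q2 + q1*p2)*Re z + p1*q1 = 0}"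
    proof cases
      case FF
      have "cmod (z - of_real ((r + r')/2)) = \<bar>r - r'\<bar>/2 \<longleftrightarrow> (x - (r + r')/2)^2 + y^2 = (\<bar>r - r'\<bar>/2)^2"
        unfolding x_y_def by (rule cmod_eq_iff) simp
      also have "\<dots> \<longleftrightarrow> (x^2 + y^2) - (r + r')*x + r*r' = 0"
      proof -
        have "(x - (r + r')/2)^2 + y^2 - (\<bar>r - r'\<bar>/2)^2 = (x^2 + y^2) - (r + r')*x + r*r'"
          unfolding power_divide power2_abs by (simp add: power2_eq_square field_simps)
        then show ?thesis by linarith
      qed
      also have "\<dots> \<longleftrightarrow> k*k' * ((x^2 + y^2) - (r + r')*x + r*r') = 0" using kk by simp
      finally have e: "cmod (z - of_real ((r + r')/2)) = \<bar>r - r'\<bar>/2 \<longleftrightarrow> k*k' * ((x^2 + y^2) - (r + r')*x + r*r') = 0" .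
      have "p2*q2*(x^2 + y^2) - (p1*q2 + q1*p2)*x + p1*q1 = k*k' * ((x^2 + y^2) - (r + r')*x + r*r')"
        using FF by (simp add: algebra_simps)
      then show ?thesis using FF e unfolding x_y_def by simp
    next
      case FI
      have "p2*q2*(x^2 + y^2) - (p1*q2 + q1*p2)*x + p1*q1 = k*k' * (r - x)"
        using FI by (simp add: algebra_simps)
      then show ?thesis using FI kk unfolding x_y_def by auto
    next
      case IF
      have "p2*q2*(x^2 + y^2) - (p1*q2 + q1*p2)*x + p1*q1 = k*k' * (r' - x)"
        using IF by (simp add: algebra_simps)
      then show ?thesis using IF kk unfolding x_y_def by auto
    next
      case II
      then show ?thesis using D by simp
    qed
  qed
qed



lemma G_ident:
  fixes p1 p2 q1 q2 r1 r2 u1 u2 :: real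
  shows "((-(p1 * q2 + q1 * p2)) * (r1 * u1) - (p1 * q1) * (-(r1 * u2 + u1 * r2))) * ((p2 * q2) * (-(r1 * u2 + u1 * r2)) - (-(p1 * q2 + q1 * p2)) * (r2 * u2))
     - ((p1 * q1) * (r2 * u2) - (p2 * q2) * (r1 * u1))^2
     = - ((p1 * r2 - p2 * r1) * (u1 * q2 - u2 * q1) * (p1 * u2 - p2 * u1) * (r1 * q2 - r2 * q1))"
  by (simp add: power2_eq_square algebra_simps)

lemma par_zero:
  fixes p1 p2 r1 r2 u1 u2 :: real
  assumes "r1 * p2 - r2 * p1 = 0" "u1 * p2 - u2 * p1 = 0" "r1 * u2 - r2 * u1 \<noteq> 0"
  shows "p1 = 0 \<and> p2 = 0"
proof -
  have "p1 * (r1 * u2 - r2 * u1) = u1 * (r1 * p2 - r2 * p1) - r1 * (u1 * p2 - u2 * p1)" by (simp add: algebra_simps)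
  also have "\<dots> = 0" unfolding assms(1,2) by simp
  finally have 1: "p1 * (r1 * u2 - r2 * u1) = 0" .
  have "p2 * (r1 * u2 - r2 * u1) = u2 * (r1 * p2 - r2 * p1) - r2 * (u1 * p2 - u2 * p1)" by (simp add: algebra_simps)
  also have "\<dots> = 0" unfolding assms(1,2) by simp
  finally have 2: "p2 * (r1 * u2 - r2 * u1) = 0" .
  show ?thesis using 1 2 assms(3) by simp
qed

lemma inter_iff:
  fixes p1 p2 q1 q2 r1 r2 u1 u2 :: real
  assumes D1: "p1 * q2 - p2 * q1 \<noteq> 0" and D2: "r1 * u2 - r2 * u1 \<noteq> 0"
    and ne1: "\<not> (p1 * r2 - p2 * r1 = 0 \<and> q1 * u2 - q2 * u1 = 0)"
    and ne2: "\<not> (p1 * u2 - p2 * u1 = 0 \<and> q1 * r2 - q2 * r1 = 0)"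
  shows "(\<exists>x y. y > 0 \<and> p2 * q2 * (x^2 + y^2) - (p1 * q2 + q1 * p2) * x + p1 * q1 = 0
                      \<and> r2 * u2 * (x^2 + y^2) - (r1 * u2 + u1 * r2) * x + r1 * u1 = 0)
     \<longleftrightarrow> (p1 * r2 - p2 * r1) * (u1 * q2 - u2 * q1) * (p1 * u2 - p2 * u1) * (r1 * q2 - r2 * q1) < 0"
    (is "?L \<longleftrightarrow> ?prod < 0")
proof -
  define U1 U2 U3 where "U1 = p2 * q2" "U2 = -(p1 * q2 + q1 * p2)" "U3 = p1 * q1"
  define V1 V2 V3 where "V1 = r2 * u2" "V2 = -(r1 * u2 + u1 * r2)" "V3 = r1 * u1"
  define Dl where "Dl = U1 * V2 - U2 * V1"
  define G where "G = (U2 * V3 - U3 * V2) * Dl - (U3 * V1 - U1 * V3)^2"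
  have Gp: "G = - ?prod" unfolding G_def Dl_def U1_U2_U3_def V1_V2_V3_def by (rule G_ident)
  have eqU: "p2 * q2 * w - (p1 * q2 + q1 * p2) * x + p1 * q1 = U1 * w + U2 * x + U3" for w x
    unfolding U1_U2_U3_def by (simp add: algebra_simps)
  have eqV: "r2 * u2 * w - (r1 * u2 + u1 * r2) * x + r1 * u1 = V1 * w + V2 * x + V3" for w x
    unfolding V1_V2_V3_def by (simp add: algebra_simps)
  show ?thesis
  proof
    assume ?L
    then obtain x y where xy: "y > 0" "U1 * (x^2 + y^2) + U2 * x + U3 = 0" "V1 * (x^2 + y^2) + V2 * x + V3 = 0"
      unfolding eqU eqV by blast
    define w where "w = x^2 + y^2"
    have e1: "U1 * w + U2 * x + U3 = 0" "V1 * w + V2 * x + V3 = 0" using xy w_def by auto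
    have hw: "Dl * w = U2 * V3 - U3 * V2"
    proof -
      have "Dl * w - (U2 * V3 - U3 * V2) = V2 * (U1 * w + U2 * x + U3) - U2 * (V1 * w + V2 * x + V3)"
        unfolding Dl_def by (simp add: algebra_simps)
      then show ?thesis using e1 by simp
    qed
    have hx: "Dl * x = U3 * V1 - U1 * V3"
    proof -
      have "Dl * x - (U3 * V1 - U1 * V3) = U1 * (V1 * w + V2 * x + V3) - V1 * (U1 * w + U2 * x + U3)"
        unfolding Dl_def by (simp add: algebra_simps)
      then show ?thesis using e1 by simp
    qed
    show "?prod < 0"
    proof (cases "Dl = 0")
      case False
      have "G = Dl^2 * y^2" unfolding G_def hw[symmetric] hx[symmetric] w_def by (simp add: power2_eq_square algebra_simps)
      moreover have "Dl^2 * y^2 > 0" using False xy by simp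
      ultimately show ?thesis using Gp by simp
    next
      case True
      have m1: "U2 * V3 = U3 * V2" and m2: "U3 * V1 = U1 * V3" and m3: "U1 * V2 = U2 * V1"
        using hw hx True unfolding Dl_def by auto
      have Vnz: "\<not> (V1 = 0 \<and> V2 = 0 \<and> V3 = 0)"
      proof
        assume "V1 = 0 \<and> V2 = 0 \<and> V3 = 0"
        moreover have "V2^2 - 4 * V1 * V3 = (r1 * u2 - r2 * u1)^2" unfolding V1_V2_V3_def by (simp add: power2_eq_square algebra_simps)
        ultimately show False using D2 by simp
      qed
      have root: "(t1 * p2 - t2 * p1) * (t1 * q2 - t2 * q1) = 0"
        if tv: "V1 * t1^2 + V2 * t1 * t2 + V3 * t2^2 = 0" for t1 t2
      proof -
        define Fu where "Fu = U1 * t1^2 + U2 * t1 * t2 + U3 * t2^2"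
        define Fv where "Fv = V1 * t1^2 + V2 * t1 * t2 + V3 * t2^2"
        have "V1 * Fu - U1 * Fv = (U2 * V1 - U1 * V2) * t1 * t2 + (U3 * V1 - U1 * V3) * t2^2"
          unfolding Fu_def Fv_def by (simp add: algebra_simps)
        then have a1: "V1 * Fu = U1 * Fv" using m2 m3 by simp
        have "V2 * Fu - U2 * Fv = (U1 * V2 - U2 * V1) * t1^2 + (U3 * V2 - U2 * V3) * t2^2"
          unfolding Fu_def Fv_def by (simp add: algebra_simps)
        then have a2: "V2 * Fu = U2 * Fv" using m1 m3 by simp
        have "V3 * Fu - U3 * Fv = (U1 * V3 - U3 * V1) * t1^2 + (U2 * V3 - U3 * V2) * t1 * t2"
          unfolding Fu_def Fv_def by (simp add: algebra_simps)
        then have a3: "V3 * Fu = U3 * Fv" using m1 m2 by simp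
        have "Fv = 0" using tv unfolding Fv_def .
        then have "V1 * Fu = 0" "V2 * Fu = 0" "V3 * Fu = 0" using a1 a2 a3 by auto
        then have "Fu = 0" using Vnz by auto
        moreover have "Fu = (t1 * p2 - t2 * p1) * (t1 * q2 - t2 * q1)" unfolding Fu_def U1_U2_U3_def by (simp add: power2_eq_square algebra_simps)
        ultimately show ?thesis by simp
      qed
      have "V1 * r1^2 + V2 * r1 * r2 + V3 * r2^2 = 0" unfolding V1_V2_V3_def by (simp add: power2_eq_square algebra_simps)
      then have rr: "(r1 * p2 - r2 * p1) * (r1 * q2 - r2 * q1) = 0" by (rule root)
      have "V1 * u1^2 + V2 * u1 * u2 + V3 * u2^2 = 0" unfolding V1_V2_V3_def by (simp add: power2_eq_square algebra_simps)
      then have uu: "(u1 * p2 - u2 * p1) * (u1 * q2 - u2 * q1) = 0" by (rule root)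
      have False
      proof (cases "r1 * p2 - r2 * p1 = 0")
        case rp: True
        show False
        proof (cases "u1 * p2 - u2 * p1 = 0")
          case True
          then have "p1 = 0 \<and> p2 = 0" using par_zero[OF rp True D2] by simp
          then show False using D1 by simp
        next
          case False
          then have "u1 * q2 - u2 * q1 = 0" using uu by simp
          then show False using ne1 rp by (simp add: algebra_simps)
        qed
      next
        case rp: False
        then have rq: "r1 * q2 - r2 * q1 = 0" using rr by simp
        show False
        proof (cases "u1 * q2 - u2 * q1 = 0")
          case True
          then have "q1 = 0 \<and> q2 = 0" using par_zero[OF rq True D2] by simp
          then show False using D1 by simp
        next
          case False
          then have "u1 * p2 - u2 * p1 = 0" using uu by simp
          then show False using ne2 rq by (simp add: algebra_simps)
        qed
      qed
      then show ?thesis ..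
    qed
  next
    assume "?prod < 0"
    then have G0: "G > 0" using Gp by simp
    have Dnz: "Dl \<noteq> 0"
    proof
      assume "Dl = 0"
      then have "G = - ((U3 * V1 - U1 * V3)^2)" unfolding G_def by simp
      then show False using G0 by (smt (verit) zero_le_power2)
    qed
    define x where "x = (U3 * V1 - U1 * V3) / Dl"
    define w where "w = (U2 * V3 - U3 * V2) / Dl"
    have wx: "w - x^2 = G / Dl^2" unfolding w_def x_def G_def using Dnz by (simp add: field_simps power2_eq_square)
    have pos: "w - x^2 > 0" unfolding wx using G0 Dnz by simp
    define y where "y = sqrt (w - x^2)"
    have y: "y > 0" "x^2 + y^2 = w" unfolding y_def using pos by auto
    have c1: "U1 * w + U2 * x + U3 = 0"
    proof -
      have "U1 * w + U2 * x + U3 = (U1 * (U2 * V3 - U3 * V2) + U2 * (U3 * V1 - U1 * V3) + U3 * Dl) / Dl"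
        unfolding w_def x_def using Dnz by (simp add: field_simps)
      also have "U1 * (U2 * V3 - U3 * V2) + U2 * (U3 * V1 - U1 * V3) + U3 * Dl = 0"
        unfolding Dl_def by (simp add: algebra_simps)
      finally show ?thesis by simp
    qed
    have c2: "V1 * w + V2 * x + V3 = 0"
    proof -
      have "V1 * w + V2 * x + V3 = (V1 * (U2 * V3 - U3 * V2) + V2 * (U3 * V1 - U1 * V3) + V3 * Dl) / Dl"
        unfolding w_def x_def using Dnz by (simp add: field_simps)
      also have "V1 * (U2 * V3 - U3 * V2) + V2 * (U3 * V1 - U1 * V3) + V3 * Dl = 0"
        unfolding Dl_def by (simp add: algebra_simps)
      finally show ?thesis by simp
    qed
    show ?L unfolding eqU eqV using y c1 c2 by (intro exI[of _ x] exI[of _ y]) simp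
  qed
qed



lemma cin_iff: "x \<in> cinterval a b \<longleftrightarrow> x = a \<or> x = b \<or> cyc_between a x b"
  by (simp add: cinterval_def)

lemma notinv:
  assumes ep: "eig M (p1,p2) l" and eq: "eig M (q1,q2) m" and D: "brk (p1,p2) (q1,q2) \<noteq> 0"
    and m: "0 < m" "m < l"
    and zp: "brk (z1,z2) (p1,p2) \<noteq> 0" and zq: "brk (z1,z2) (q1,q2) \<noteq> 0"
  shows "cyc_between (pj (p1,p2)) (pj (q1,q2)) (pj (z1,z2)) \<Longrightarrow> bact M (pj (z1,z2)) \<notin> cinterval (pj (p1,p2)) (pj (z1,z2))"
    and "cyc_between (pj (z1,z2)) (pj (q1,q2)) (pj (p1,p2)) \<Longrightarrow> bact M (pj (z1,z2)) \<notin> cinterval (pj (z1,z2)) (pj (p1,p2))"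
proof -
  define Dd where "Dd = p1 * q2 - p2 * q1"
  have Dd: "Dd \<noteq> 0" using D Dd_def by simp
  obtain a b where ab: "z1 = a * p1 + b * q1" "z2 = a * p2 + b * q2" using decomp[OF D] by blast
  have bzq: "brk (z1,z2) (q1,q2) = a * Dd" unfolding ab Dd_def by (simp add: algebra_simps)
  have bzp: "brk (z1,z2) (p1,p2) = - b * Dd" unfolding ab Dd_def by (simp add: algebra_simps)
  have a: "a \<noteq> 0" using zq bzq by auto
  have b: "b \<noteq> 0" using zp bzp by auto
  have pnz: "(p1,p2) \<noteq> (0,0)" and qnz: "(q1,q2) \<noteq> (0,0)" using ep eq by (auto simp: eig_def)
  have znz: "(z1,z2) \<noteq> (0,0)" using zp by auto
  define w1 w2 where "w1 = l * a * p1 + m * b * q1" "w2 = l * a * p2 + m * b * q2"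
  have wnz: "(w1,w2) \<noteq> (0,0)" using lin_nz[OF D, of "l*a" "m*b"] a b m unfolding w1_w2_def by (simp add: mult.assoc)
  have e: "ma M * p1 + mb M * p2 = l * p1" "mc M * p1 + md M * p2 = l * p2"
       "ma M * q1 + mb M * q2 = m * q1" "mc M * q1 + md M * q2 = m * q2"
    using ep eq by (auto simp: eig_simp)
  have mvz: "mv M (z1,z2) = (w1,w2)"
  proof -
    have "ma M * z1 + mb M * z2 = a * (ma M * p1 + mb M * p2) + b * (ma M * q1 + mb M * q2)"
      unfolding ab by (simp add: algebra_simps)
    moreover have "mc M * z1 + md M * z2 = a * (mc M * p1 + md M * p2) + b * (mc M * q1 + md M * q2)"
      unfolding ab by (simp add: algebra_simps)
    ultimately show ?thesis unfolding w1_w2_def e by (simp add: algebra_simps)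
  qed
  have act: "bact M (pj (z1,z2)) = pj (w1,w2)" using bact_pj[OF znz] mvz by simp
  have bwp: "brk (w1,w2) (p1,p2) = - m * b * Dd" unfolding w1_w2_def Dd_def by (simp add: algebra_simps)
  have bwz: "brk (w1,w2) (z1,z2) = (l - m) * a * b * Dd" unfolding w1_w2_def Dd_def ab by (simp add: algebra_simps)
  have lm: "l - m > 0" using m by simp
  have "brk (w1,w2) (p1,p2) \<noteq> 0" unfolding bwp using m b Dd by simp
  then have n1: "pj (w1,w2) \<noteq> pj (p1,p2)" using pj_eq[OF wnz pnz] by blast
  have "brk (w1,w2) (z1,z2) \<noteq> 0" unfolding bwz using lm a b Dd by simp
  then have n2: "pj (w1,w2) \<noteq> pj (z1,z2)" using pj_eq[OF wnz znz] by blast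
  have E1: "brk (p1,p2) (q1,q2) * brk (q1,q2) (z1,z2) * brk (z1,z2) (p1,p2) = a * b * Dd^3"
    unfolding ab Dd_def by (simp add: algebra_simps power3_eq_cube)
  have T1: "brk (p1,p2) (w1,w2) * brk (w1,w2) (z1,z2) * brk (z1,z2) (p1,p2) = - (m * (l - m) * b^2) * (a * b * Dd^3)"
    unfolding ab Dd_def w1_w2_def by (simp add: algebra_simps power3_eq_cube power2_eq_square)
  have E2: "brk (z1,z2) (q1,q2) * brk (q1,q2) (p1,p2) * brk (p1,p2) (z1,z2) = - (a * b * Dd^3)"
    unfolding ab Dd_def by (simp add: algebra_simps power3_eq_cube)
  have T2: "brk (z1,z2) (w1,w2) * brk (w1,w2) (p1,p2) * brk (p1,p2) (z1,z2) = - (m * (l - m) * b^2) * (- (a * b * Dd^3))"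
    unfolding ab Dd_def w1_w2_def by (simp add: algebra_simps power3_eq_cube power2_eq_square)
  have kpos: "m * (l - m) * b^2 > 0" using m lm b by simp
  show "bact M (pj (z1,z2)) \<notin> cinterval (pj (p1,p2)) (pj (z1,z2))"
    if c: "cyc_between (pj (p1,p2)) (pj (q1,q2)) (pj (z1,z2))"
  proof -
    have "a * b * Dd^3 > 0" using c cyc_pj[OF pnz qnz znz] E1 by simp
    then have "brk (p1,p2) (w1,w2) * brk (w1,w2) (z1,z2) * brk (z1,z2) (p1,p2) < 0"
      unfolding T1 using kpos by (simp add: mult_pos_pos)
    then have "\<not> cyc_between (pj (p1,p2)) (pj (w1,w2)) (pj (z1,z2))" using cyc_pj[OF pnz wnz znz] by simp
    then show ?thesis unfolding act cin_iff using n1 n2 by simp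
  qed
  show "bact M (pj (z1,z2)) \<notin> cinterval (pj (z1,z2)) (pj (p1,p2))"
    if c: "cyc_between (pj (z1,z2)) (pj (q1,q2)) (pj (p1,p2))"
  proof -
    have "- (a * b * Dd^3) > 0" using c cyc_pj[OF znz qnz pnz] E2 by simp
    then have "brk (z1,z2) (w1,w2) * brk (w1,w2) (p1,p2) * brk (p1,p2) (z1,z2) < 0"
      unfolding T2 using kpos by (simp add: mult_pos_neg)
    then have "\<not> cyc_between (pj (z1,z2)) (pj (w1,w2)) (pj (p1,p2))" using cyc_pj[OF znz wnz pnz] by simp
    then show ?thesis unfolding act cin_iff using n1 n2 by auto
  qed
qed



lemma trace_ident:
  fixes a b c d a' b' c' d' l m l' m' p1 p2 q1 q2 r1 r2 u1 u2 :: real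
  assumes "a * (p1 * q2 - p2 * q1) = l * p1 * q2 - m * p2 * q1"
    "b * (p1 * q2 - p2 * q1) = (m - l) * p1 * q1"
    "c * (p1 * q2 - p2 * q1) = (l - m) * p2 * q2"
    "d * (p1 * q2 - p2 * q1) = m * p1 * q2 - l * p2 * q1"
    "a' * (r1 * u2 - r2 * u1) = l' * r1 * u2 - m' * r2 * u1"
    "b' * (r1 * u2 - r2 * u1) = (m' - l') * r1 * u1"
    "c' * (r1 * u2 - r2 * u1) = (l' - m') * r2 * u2"
    "d' * (r1 * u2 - r2 * u1) = m' * r1 * u2 - l' * r2 * u1"
  shows "(p1 * q2 - p2 * q1) * (r1 * u2 - r2 * u1) * ((a * a' + b * c' + c * b' + d * d') - (l * l' + m * m'))
          = (l - m) * (l' - m') * ((p1 * r2 - p2 * r1) * (u1 * q2 - u2 * q1))"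
    and "(p1 * q2 - p2 * q1) * (r1 * u2 - r2 * u1) * ((a * a' + b * c' + c * b' + d * d') - (l * m' + m * l'))
          = (l - m) * (l' - m') * ((p1 * u2 - p2 * u1) * (r1 * q2 - r2 * q1))"
proof -
  define Dp Dr where "Dp = p1 * q2 - p2 * q1" "Dr = r1 * u2 - r2 * u1"
  have h: "Dp * Dr * (a * a' + b * c' + c * b' + d * d') = (a * Dp) * (a' * Dr) + (b * Dp) * (c' * Dr) + (c * Dp) * (b' * Dr) + (d * Dp) * (d' * Dr)"
    by (simp add: algebra_simps)
  have h2: "Dp * Dr * (a * a' + b * c' + c * b' + d * d') = (l * p1 * q2 - m * p2 * q1) * (l' * r1 * u2 - m' * r2 * u1)
     + ((m - l) * p1 * q1) * ((l' - m') * r2 * u2) + ((l - m) * p2 * q2) * ((m' - l') * r1 * u1)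
     + (m * p1 * q2 - l * p2 * q1) * (m' * r1 * u2 - l' * r2 * u1)"
    unfolding h using assms unfolding Dp_Dr_def by simp
  show "(p1 * q2 - p2 * q1) * (r1 * u2 - r2 * u1) * ((a * a' + b * c' + c * b' + d * d') - (l * l' + m * m'))
          = (l - m) * (l' - m') * ((p1 * r2 - p2 * r1) * (u1 * q2 - u2 * q1))"
    using h2 unfolding Dp_Dr_def by (simp add: algebra_simps)
  show "(p1 * q2 - p2 * q1) * (r1 * u2 - r2 * u1) * ((a * a' + b * c' + c * b' + d * d') - (l * m' + m * l'))
          = (l - m) * (l' - m') * ((p1 * u2 - p2 * u1) * (r1 * q2 - r2 * q1))"
    using h2 unfolding Dp_Dr_def by (simp add: algebra_simps)
qed

lemma comm_eig:
  assumes "eig A (p1,p2) l" "eig A (q1,q2) m" "eig B (p1,p2) l'" "eig B (q1,q2) m'"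
    and D: "brk (p1,p2) (q1,q2) \<noteq> 0"
  shows "A ** B = B ** A"
proof -
  define Dp where "Dp = p1 * q2 - p2 * q1"
  have Dp: "Dp \<noteq> 0" using D Dp_def by simp
  note ea = entries_eig[OF assms(1,2), folded Dp_def]
  note eb = entries_eig[OF assms(3,4), folded Dp_def]
  have "Dp^2 * ma (A ** B) = Dp^2 * ma (B ** A)"
  proof -
    have "Dp^2 * ma (A ** B) = (ma A * Dp) * (ma B * Dp) + (mb A * Dp) * (mc B * Dp)" by (simp add: entries_mult power2_eq_square algebra_simps)
    moreover have "Dp^2 * ma (B ** A) = (ma B * Dp) * (ma A * Dp) + (mb B * Dp) * (mc A * Dp)" by (simp add: entries_mult power2_eq_square algebra_simps)
    ultimately show ?thesis unfolding ea eb by (simp only:) (simp add: algebra_simps)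
  qed
  moreover have "Dp^2 * mb (A ** B) = Dp^2 * mb (B ** A)"
  proof -
    have "Dp^2 * mb (A ** B) = (ma A * Dp) * (mb B * Dp) + (mb A * Dp) * (md B * Dp)" by (simp add: entries_mult power2_eq_square algebra_simps)
    moreover have "Dp^2 * mb (B ** A) = (ma B * Dp) * (mb A * Dp) + (mb B * Dp) * (md A * Dp)" by (simp add: entries_mult power2_eq_square algebra_simps)
    ultimately show ?thesis unfolding ea eb by (simp only:) (simp add: algebra_simps)
  qed
  moreover have "Dp^2 * mc (A ** B) = Dp^2 * mc (B ** A)"
  proof -
    have "Dp^2 * mc (A ** B) = (mc A * Dp) * (ma B * Dp) + (md A * Dp) * (mc B * Dp)" by (simp add: entries_mult power2_eq_square algebra_simps)
    moreover have "Dp^2 * mc (B ** A) = (mc B * Dp) * (ma A * Dp) + (md B * Dp) * (mc A * Dp)" by (simp add: entries_mult power2_eq_square algebra_simps)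
    ultimately show ?thesis unfolding ea eb by (simp only:) (simp add: algebra_simps)
  qed
  moreover have "Dp^2 * md (A ** B) = Dp^2 * md (B ** A)"
  proof -
    have "Dp^2 * md (A ** B) = (mc A * Dp) * (mb B * Dp) + (md A * Dp) * (md B * Dp)" by (simp add: entries_mult power2_eq_square algebra_simps)
    moreover have "Dp^2 * md (B ** A) = (mc B * Dp) * (mb A * Dp) + (md B * Dp) * (md A * Dp)" by (simp add: entries_mult power2_eq_square algebra_simps)
    ultimately show ?thesis unfolding ea eb by (simp only:) (simp add: algebra_simps)
  qed
  ultimately show ?thesis using Dp by (simp add: matrix_eq_entries)
qed

lemma eig_par:
  assumes "eig B (r1,r2) l" "r1 = k * p1" "r2 = k * p2" "(p1,p2) \<noteq> (0,0)"
  shows "eig B (p1,p2) l"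
proof -
  have k: "k \<noteq> 0" using assms by (auto simp: eig_def)
  have "k * (ma B * p1 + mb B * p2) = k * (l * p1)" "k * (mc B * p1 + md B * p2) = k * (l * p2)"
    using assms(1) unfolding assms(2,3) eig_simp by (simp_all add: algebra_simps)
  then show ?thesis using k assms(4) by (simp add: eig_simp)
qed



lemma arcosh_l: assumes "l > (1::real)" shows "arcosh ((l + 1/l)^2/2 - 1) = ln (l^2)"
proof -
  have "(l + 1/l)^2/2 - 1 = (l^2 + inverse (l^2)) / 2" using assms
    by (simp add: power2_eq_square field_simps)
  also have "\<dots> = cosh (ln (l^2))" using assms by (simp add: cosh_ln_real)
  finally show ?thesis using assms by (simp add: arcosh_cosh_real)
qed

lemma tlen_cmp:
  fixes T l l' :: real
  assumes l: "l > 1" and l': "l' > 1" and T: "T > 2"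
  defines "S \<equiv> l * l' + (1/l) * (1/l')"
  shows "(arcosh (T^2/2 - 1) < arcosh ((l + 1/l)^2/2 - 1) + arcosh ((l' + 1/l')^2/2 - 1) \<longleftrightarrow> T < S)
    \<and> (arcosh (T^2/2 - 1) = arcosh ((l + 1/l)^2/2 - 1) + arcosh ((l' + 1/l')^2/2 - 1) \<longleftrightarrow> T = S)
    \<and> (arcosh (T^2/2 - 1) > arcosh ((l + 1/l)^2/2 - 1) + arcosh ((l' + 1/l')^2/2 - 1) \<longleftrightarrow> T > S)"
proof -
  define L where "L = (l * l')^2"
  have "l * l' > 1" using l l' by (simp add: less_1_mult)
  then have L1: "L \<ge> 1" unfolding L_def by (simp add: one_le_power)
  have sum: "arcosh ((l + 1/l)^2/2 - 1) + arcosh ((l' + 1/l')^2/2 - 1) = ln L"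
    unfolding arcosh_l[OF l] arcosh_l[OF l'] L_def using l l' by (simp add: ln_mult power_mult_distrib)
  have lnL: "ln L \<ge> 0" using L1 by simp
  define y where "y = T^2/2 - 1"
  have "T * T > 2 * 2" using T by (intro mult_strict_mono) auto
  then have y1: "y \<ge> 1" unfolding y_def by (simp add: power2_eq_square)
  have ac: "arcosh y \<ge> 0" using y1 by simp
  have cy: "cosh (arcosh y) = y" using y1 by simp
  have cL: "cosh (ln L) = (L + inverse L)/2" using L1 by (simp add: cosh_ln_real)
  have Spos: "S > 0" unfolding S_def using l l' by (simp add: add_pos_pos)
  define P where "P = l * l'"
  have P: "P \<noteq> 0" unfolding P_def using l l' by simp
  have SP: "S = P + 1/P" unfolding S_def P_def by simp
  have LP: "L = P^2" unfolding L_def P_def ..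
  have diff: "y - cosh (ln L) = (T - S) * (T + S) / 2"
    unfolding cL unfolding y_def SP LP using P by (simp add: field_simps power2_eq_square)
  have TS: "T + S > 0" using T Spos by simp
  have lt: "arcosh y < ln L \<longleftrightarrow> y < cosh (ln L)"
    using cosh_real_nonneg_less_iff[OF ac lnL] cy by simp
  have gt: "arcosh y > ln L \<longleftrightarrow> y > cosh (ln L)"
    using cosh_real_nonneg_less_iff[OF lnL ac] cy by simp
  have eq: "arcosh y = ln L \<longleftrightarrow> y = cosh (ln L)"
    using lt gt by (metis less_irrefl linorder_neqE_linordered_idom)
  have s1: "y < cosh (ln L) \<longleftrightarrow> T < S"
  proof -
    have "y < cosh (ln L) \<longleftrightarrow> y - cosh (ln L) < 0" by simp
    also have "\<dots> \<longleftrightarrow> (T - S) * (T + S) < 0" unfolding diff by simp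
    also have "\<dots> \<longleftrightarrow> T < S" using TS by (simp add: mult_less_0_iff)
    finally show ?thesis .
  qed
  have s2: "y > cosh (ln L) \<longleftrightarrow> T > S"
  proof -
    have "y > cosh (ln L) \<longleftrightarrow> y - cosh (ln L) > 0" by simp
    also have "\<dots> \<longleftrightarrow> (T - S) * (T + S) > 0" unfolding diff by simp
    also have "\<dots> \<longleftrightarrow> T > S" using TS by (simp add: zero_less_mult_iff)
    finally show ?thesis .
  qed
  have s3: "y = cosh (ln L) \<longleftrightarrow> T = S" using s1 s2 by (metis less_irrefl linorder_neqE_linordered_idom)
  show ?thesis unfolding sum using lt gt eq s1 s2 s3 unfolding y_def by simp
qed

lemma geod_ne:
  assumes D: "brk (p1,p2) (q1,q2) \<noteq> 0"
  shows "geodesic (pj (p1,p2)) (pj (q1,q2)) \<noteq> {}"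
proof -
  have pnz: "(p1,p2) \<noteq> (0,0)" and qnz: "(q1,q2) \<noteq> (0,0)" using D by auto
  obtain k r where k: "k \<noteq> 0" "((p1,p2) = (k*r, k) \<and> pj (p1,p2) = Some r) \<or> ((p1,p2) = (k, 0) \<and> pj (p1,p2) = None)"
    using pj_norm[OF pnz] by blast
  obtain k' r' where k': "k' \<noteq> 0" "((q1,q2) = (k'*r', k') \<and> pj (q1,q2) = Some r') \<or> ((q1,q2) = (k', 0) \<and> pj (q1,q2) = None)"
    using pj_norm[OF qnz] by blast
  consider (FF) "pj (p1,p2) = Some r" "pj (q1,q2) = Some r'" "r \<noteq> r'"
    | (FI) "pj (p1,p2) = Some r" "pj (q1,q2) = None"
    | (IF) "pj (p1,p2) = None" "pj (q1,q2) = Some r'"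
    using k k' D by (auto simp: algebra_simps)
  then show ?thesis
  proof cases
    case FF
    have "Complex ((r + r')/2) (\<bar>r - r'\<bar>/2) \<in> geodesic (pj (p1,p2)) (pj (q1,q2))"
      unfolding FF using FF(3) by (simp add: cmod_def)
    then show ?thesis by blast
  next
    case FI
    have "Complex r 1 \<in> geodesic (pj (p1,p2)) (pj (q1,q2))" unfolding FI by simp
    then show ?thesis by blast
  next
    case IF
    have "Complex r' 1 \<in> geodesic (pj (p1,p2)) (pj (q1,q2))" unfolding IF by simp
    then show ?thesis by blast
  qed
qed

lemma Iint_mem: "Iint M N a b = Some I \<Longrightarrow> a \<in> I \<and> b \<in> I"
  unfolding Iint_def by (auto split: if_splits simp: cinterval_def)

lemma Iint_cases: "Iint M N a b \<noteq> None \<Longrightarrow> a \<noteq> b \<Longrightarrow> inv_both M N (cinterval a b) \<or> inv_both M N (cinterval b a)"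
  unfolding Iint_def by (auto split: if_splits)



lemma sq4: "(t::real) > 2 \<Longrightarrow> t^2 > 4"
proof -
  assume "t > 2"
  then have "t * t > 2 * 2" by (intro mult_strict_mono) auto
  then show ?thesis by (simp add: power2_eq_square)
qed

theorem theorem2p5:
  fixes A B :: "real^2^2"
  assumes "SL2R A" and "SL2R B"
    and "A ** B \<noteq> B ** A"
    and "hyperbolic A" and "hyperbolic B"
    and "trace A \<ge> 2" and "trace B \<ge> 2"
    and "coherently_oriented A B"
    and "the (Iplus A B) \<inter> the (Iminus A B) = {}"
  shows "(tlen (A ** B) < tlen A + tlen B \<longleftrightarrow> axes_intersecting A B)
       \<and> (tlen (A ** B) = tlen A + tlen B \<longleftrightarrow> axes_asymptotically_parallel A B)
       \<and> (tlen (A ** B) > tlen A + tlen B \<longleftrightarrow> axes_ultraparallel A B)"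
proof -
  have tA: "trace A > 2" and tB: "trace B > 2" using assms(4,5) by (auto simp: hyperbolic_def)
  obtain p1 p2 q1 q2 l where A: "l > 1" "eig A (p1,p2) l" "eig A (q1,q2) (1/l)" "brk (p1,p2) (q1,q2) \<noteq> 0" "trace A = l + 1/l"
    using eig_exists[OF assms(1) tA] by blast
  obtain r1 r2 u1 u2 l' where B: "l' > 1" "eig B (r1,r2) l'" "eig B (u1,u2) (1/l')" "brk (r1,r2) (u1,u2) \<noteq> 0" "trace B = l' + 1/l'"
    using eig_exists[OF assms(2) tB] by blast
  have "1/l < 1" using A(1) by simp
  then have lA: "0 < 1/l" "1/l < l" using A(1) by (simp, linarith)
  have "1/l' < 1" using B(1) by simp
  then have lB: "0 < 1/l'" "1/l' < l'" using B(1) by (simp, linarith)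
  have attrA: "attr A = pj (p1,p2)" using attr_eig[OF A(2) A(3) A(4) lA] .
  have attrB: "attr B = pj (r1,r2)" using attr_eig[OF B(2) B(3) B(4) lB] .
  have repA: "repel A = pj (q1,q2)" using repel_eig[OF assms(1) A(2) A(3) A(4) A(1)] .
  have repB: "repel B = pj (u1,u2)" using repel_eig[OF assms(2) B(2) B(3) B(4) B(1)] .
  have pnz: "(p1,p2) \<noteq> (0,0)" and qnz: "(q1,q2) \<noteq> (0,0)" using A(4) by auto
  have rnz: "(r1,r2) \<noteq> (0,0)" and unz: "(u1,u2) \<noteq> (0,0)" using B(4) by auto
  define Dp where "Dp = p1 * q2 - p2 * q1"
  define Dr where "Dr = r1 * u2 - r2 * u1"
  define Xp where "Xp = (p1 * r2 - p2 * r1) * (u1 * q2 - u2 * q1)"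
  define Yp where "Yp = (p1 * u2 - p2 * u1) * (r1 * q2 - r2 * q1)"
  define XX where "XX = Dp * Dr * Xp"
  define YY where "YY = Dp * Dr * Yp"
  have Dp: "Dp \<noteq> 0" using A(4) Dp_def by simp
  have Dr: "Dr \<noteq> 0" using B(4) Dr_def by simp
  have DD: "(Dp * Dr)^2 > 0" using Dp Dr by simp
  define T where "T = trace (A ** B)"
  have Tform: "T = ma A * ma B + mb A * mc B + mc A * mb B + md A * md B"
    unfolding T_def trace_entries entries_mult by simp
  define k where "k = (l - 1/l) * (l' - 1/l')"
  have kpos: "k > 0" unfolding k_def using lA lB by simp
  note eA = entries_eig[OF A(2) A(3)] and eB = entries_eig[OF B(2) B(3)]
  have tr1: "Dp * Dr * (T - (l * l' + 1/l * (1/l'))) = k * Xp"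
    unfolding Tform Dp_def Dr_def k_def Xp_def
    by (rule trace_ident(1)[OF eA eB])
  have tr2: "Dp * Dr * (T - (l * (1/l') + 1/l * l')) = k * Yp"
    unfolding Tform Dp_def Dr_def k_def Yp_def
    by (rule trace_ident(2)[OF eA eB])
  have pl: "Yp = Dp * Dr + Xp" unfolding Yp_def Xp_def Dp_def Dr_def by (simp add: algebra_simps)
  have YYX: "YY = (Dp * Dr)^2 + XX" unfolding YY_def XX_def pl by (simp add: power2_eq_square algebra_simps)
  obtain I where I: "Iplus A B = Some I" using assms(8) unfolding coherently_oriented_def by blast
  obtain J where J: "Iminus A B = Some J" using assms(8) unfolding coherently_oriented_def by blast
  have IJ: "I \<inter> J = {}" using assms(9) I J by simp
  have hI: "attr A \<in> I" "attr B \<in> I" using Iint_mem[of A B "attr A" "attr B" I] I unfolding Iplus_def by auto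
  have hJ: "repel A \<in> J" "repel B \<in> J"
    using Iint_mem[of "matrix_inv A" "matrix_inv B" "repel A" "repel B" J] J unfolding Iminus_def by auto
  have "pj (p1,p2) \<noteq> pj (u1,u2)" using hI hJ IJ attrA repB by auto
  then have pu: "p1 * u2 - p2 * u1 \<noteq> 0" using pj_eq[OF pnz unz] by simp
  have "pj (r1,r2) \<noteq> pj (q1,q2)" using hI hJ IJ attrB repA by auto
  then have rq: "r1 * q2 - r2 * q1 \<noteq> 0" using pj_eq[OF rnz qnz] by simp
  have Yp0: "Yp \<noteq> 0" unfolding Yp_def using pu rq by simp
  have YYpos: "YY > 0"
  proof (rule ccontr)
    assume "\<not> YY > 0"
    moreover have "YY \<noteq> 0" unfolding YY_def using Dp Dr Yp0 by simp
    ultimately have YYn: "YY < 0" by simp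
    then have "XX < 0" using YYX DD by linarith
    then have "Xp \<noteq> 0" unfolding XX_def by auto
    then have pr: "p1 * r2 - p2 * r1 \<noteq> 0" unfolding Xp_def by auto
    have PR: "pj (p1,p2) \<noteq> pj (r1,r2)" using pj_eq[OF pnz rnz] pr by simp
    have inv: "inv_both A B (cinterval (pj (p1,p2)) (pj (r1,r2))) \<or> inv_both A B (cinterval (pj (r1,r2)) (pj (p1,p2)))"
      using Iint_cases[of A B "attr A" "attr B"] I PR unfolding Iplus_def attrA attrB by auto
    define o1 where "o1 = brk (p1,p2) (q1,q2) * brk (q1,q2) (r1,r2) * brk (r1,r2) (p1,p2)"
    define o2 where "o2 = brk (p1,p2) (u1,u2) * brk (u1,u2) (r1,r2) * brk (r1,r2) (p1,p2)"
    define PR RQ PU where "PR = p1 * r2 - p2 * r1" "RQ = r1 * q2 - r2 * q1" "PU = p1 * u2 - p2 * u1"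
    have o1e: "o1 = Dp * (- RQ) * (- PR)" unfolding o1_def PR_RQ_PU_def Dp_def by (simp add: algebra_simps)
    have o2e: "o2 = PU * (- Dr) * (- PR)" unfolding o2_def PR_RQ_PU_def Dr_def by (simp add: algebra_simps)
    have YYe: "YY = Dp * Dr * (PU * RQ)" unfolding YY_def Yp_def PR_RQ_PU_def ..
    have oo: "o1 * o2 = (p1 * r2 - p2 * r1)^2 * YY"
      unfolding o1e o2e YYe PR_RQ_PU_def(1)[symmetric] by (simp add: power2_eq_square algebra_simps)
    have "o1 * o2 < 0" unfolding oo using YYn pr by (simp add: mult_pos_neg)
    then have os: "(o1 > 0 \<and> o2 < 0) \<or> (o1 < 0 \<and> o2 > 0)" by (auto simp: mult_less_0_iff)
    have o1r: "brk (r1,r2) (q1,q2) * brk (q1,q2) (p1,p2) * brk (p1,p2) (r1,r2) = - o1"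
      unfolding o1_def by (simp add: algebra_simps)
    have o2r: "brk (r1,r2) (u1,u2) * brk (u1,u2) (p1,p2) * brk (p1,p2) (r1,r2) = - o2"
      unfolding o2_def by (simp add: algebra_simps)
    have c1: "cyc_between (pj (p1,p2)) (pj (q1,q2)) (pj (r1,r2)) \<longleftrightarrow> o1 > 0"
      unfolding o1_def by (rule cyc_pj[OF pnz qnz rnz])
    have c1r: "cyc_between (pj (r1,r2)) (pj (q1,q2)) (pj (p1,p2)) \<longleftrightarrow> o1 < 0"
      using cyc_pj[OF rnz qnz pnz] o1r by simp
    have c2: "cyc_between (pj (p1,p2)) (pj (u1,u2)) (pj (r1,r2)) \<longleftrightarrow> o2 > 0"
      unfolding o2_def by (rule cyc_pj[OF pnz unz rnz])
    have c2r: "cyc_between (pj (r1,r2)) (pj (u1,u2)) (pj (p1,p2)) \<longleftrightarrow> o2 < 0"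
      using cyc_pj[OF rnz unz pnz] o2r by simp
    have rp: "brk (r1,r2) (p1,p2) \<noteq> 0" using pr by (simp add: algebra_simps)
    have rq': "brk (r1,r2) (q1,q2) \<noteq> 0" using rq by simp
    have pr': "brk (p1,p2) (r1,r2) \<noteq> 0" using pr by simp
    have pu': "brk (p1,p2) (u1,u2) \<noteq> 0" using pu by simp
    note nA = notinv[OF A(2) A(3) A(4) lA rp rq']
    note nB = notinv[OF B(2) B(3) B(4) lB pr' pu']
    have memPR: "pj (p1,p2) \<in> cinterval (pj (p1,p2)) (pj (r1,r2))" "pj (r1,r2) \<in> cinterval (pj (p1,p2)) (pj (r1,r2))"
      "pj (p1,p2) \<in> cinterval (pj (r1,r2)) (pj (p1,p2))" "pj (r1,r2) \<in> cinterval (pj (r1,r2)) (pj (p1,p2))"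
      by (auto simp: cin_iff)
    show False
    proof (cases "o1 > 0")
      case True
      then have "o2 < 0" using os by auto
      have 1: "bact A (pj (r1,r2)) \<notin> cinterval (pj (p1,p2)) (pj (r1,r2))" using nA(1) c1 True by simp
      have 2: "bact B (pj (p1,p2)) \<notin> cinterval (pj (r1,r2)) (pj (p1,p2))" using nB(1) c2r \<open>o2 < 0\<close> by simp
      show False using inv 1 2 memPR unfolding inv_both_def by blast
    next
      case False
      then have "o1 < 0" "o2 > 0" using os by auto
      have 1: "bact A (pj (r1,r2)) \<notin> cinterval (pj (r1,r2)) (pj (p1,p2))" using nA(2) c1r \<open>o1 < 0\<close> by simp
      have 2: "bact B (pj (p1,p2)) \<notin> cinterval (pj (p1,p2)) (pj (r1,r2))" using nB(2) c2 \<open>o2 > 0\<close> by simp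
      show False using inv 1 2 memPR unfolding inv_both_def by blast
    qed
  qed
  have am: "l * (1/l') + 1/l * l' \<ge> 2"
  proof -
    have "l * (1/l') + 1/l * l' - 2 = (l - l')^2 / (l * l')" using A(1) B(1) by (simp add: field_simps power2_eq_square)
    moreover have "(l - l')^2 / (l * l') \<ge> 0" using A(1) B(1) by simp
    ultimately show ?thesis by simp
  qed
  have "(Dp * Dr)^2 * (T - (l * (1/l') + 1/l * l')) = (Dp * Dr) * (Dp * Dr * (T - (l * (1/l') + 1/l * l')))"
    by (simp add: power2_eq_square)
  also have "\<dots> = (Dp * Dr) * (k * Yp)" unfolding tr2 ..
  also have "\<dots> = k * YY" unfolding YY_def by (simp add: algebra_simps)
  finally have "(Dp * Dr)^2 * (T - (l * (1/l') + 1/l * l')) = k * YY" .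
  then have "(Dp * Dr)^2 * (T - (l * (1/l') + 1/l * l')) > 0" using kpos YYpos by simp
  then have "T - (l * (1/l') + 1/l * l') > 0" using DD by (simp add: zero_less_mult_iff)
  then have T2: "T > 2" using am by simp
  have "(Dp * Dr)^2 * (T - (l * l' + 1/l * (1/l'))) = (Dp * Dr) * (Dp * Dr * (T - (l * l' + 1/l * (1/l'))))"
    by (simp add: power2_eq_square)
  also have "\<dots> = (Dp * Dr) * (k * Xp)" unfolding tr1 ..
  also have "\<dots> = k * XX" unfolding XX_def by (simp add: algebra_simps)
  finally have sx: "(Dp * Dr)^2 * (T - (l * l' + 1/l * (1/l'))) = k * XX" .
  have sgn1: "T < l * l' + 1/l * (1/l') \<longleftrightarrow> XX < 0"
  proof -
    have "T < l * l' + 1/l * (1/l') \<longleftrightarrow> (Dp * Dr)^2 * (T - (l * l' + 1/l * (1/l'))) < 0"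
      using DD by (simp add: mult_less_0_iff)
    also have "\<dots> \<longleftrightarrow> XX < 0" unfolding sx using kpos by (simp add: mult_less_0_iff)
    finally show ?thesis .
  qed
  have sgn2: "T = l * l' + 1/l * (1/l') \<longleftrightarrow> XX = 0"
  proof -
    have "T = l * l' + 1/l * (1/l') \<longleftrightarrow> (Dp * Dr)^2 * (T - (l * l' + 1/l * (1/l'))) = 0"
      using DD by simp
    also have "\<dots> \<longleftrightarrow> XX = 0" unfolding sx using kpos by simp
    finally show ?thesis .
  qed
  have sgn3: "T > l * l' + 1/l * (1/l') \<longleftrightarrow> XX > 0" using sgn1 sgn2 by linarith
  have SL: "SL2R (A ** B)" using assms(1,2) by (simp add: SL2R_def det_mul)
  have T4: "T^2 > 4" using sq4[OF T2] .
  have tA4: "(trace A)^2 > 4" using sq4[OF tA] .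
  have tB4: "(trace B)^2 > 4" using sq4[OF tB] .
  have tlAB: "tlen (A ** B) = arcosh (T^2/2 - 1)" using tlen_formula[OF SL] T4 unfolding T_def by simp
  have tlA: "tlen A = arcosh ((l + 1/l)^2/2 - 1)" using tlen_formula[OF assms(1) tA4] A(5) by simp
  have tlB: "tlen B = arcosh ((l' + 1/l')^2/2 - 1)" using tlen_formula[OF assms(2) tB4] B(5) by simp
  note cmp = tlen_cmp[OF A(1) B(1) T2]
  have L1: "tlen (A ** B) < tlen A + tlen B \<longleftrightarrow> XX < 0" unfolding tlAB tlA tlB using cmp sgn1 by simp
  have L2: "tlen (A ** B) = tlen A + tlen B \<longleftrightarrow> XX = 0" unfolding tlAB tlA tlB using cmp sgn2 by simp
  have L3: "tlen (A ** B) > tlen A + tlen B \<longleftrightarrow> XX > 0" unfolding tlAB tlA tlB using cmp sgn3 by simp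
  have axA: "axis A = {z. Im z > 0 \<and> p2 * q2 * ((Re z)^2 + (Im z)^2) - (p1 * q2 + q1 * p2) * Re z + p1 * q1 = 0}"
    unfolding axis_def attrA repA using geod_pj[OF A(4)] .
  have axB: "axis B = {z. Im z > 0 \<and> r2 * u2 * ((Re z)^2 + (Im z)^2) - (r1 * u2 + u1 * r2) * Re z + r1 * u1 = 0}"
    unfolding axis_def attrB repB using geod_pj[OF B(4)] .
  have axAne: "axis A \<noteq> {}" unfolding axis_def attrA repA using geod_ne[OF A(4)] .
  have ne1: "\<not> (p1 * r2 - p2 * r1 = 0 \<and> q1 * u2 - q2 * u1 = 0)"
  proof
    assume h: "p1 * r2 - p2 * r1 = 0 \<and> q1 * u2 - q2 * u1 = 0"
    obtain c where c: "r1 = c * p1" "r2 = c * p2" using par[of p1 p2 r1 r2] h pnz by auto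
    obtain c' where c': "u1 = c' * q1" "u2 = c' * q2" using par[of q1 q2 u1 u2] h qnz by auto
    have "eig B (p1,p2) l'" using eig_par[OF B(2) c pnz] .
    moreover have "eig B (q1,q2) (1/l')" using eig_par[OF B(3) c' qnz] .
    ultimately have "A ** B = B ** A" using comm_eig[OF A(2) A(3) _ _ A(4)] by blast
    then show False using assms(3) by simp
  qed
  have ne2: "\<not> (p1 * u2 - p2 * u1 = 0 \<and> q1 * r2 - q2 * r1 = 0)" using pu by simp
  have inter: "axes_intersecting A B \<longleftrightarrow> Xp * Yp < 0"
  proof -
    have "axes_intersecting A B \<longleftrightarrow> (\<exists>z. z \<in> axis A \<and> z \<in> axis B)" unfolding axes_intersecting_def by blast
    also have "\<dots> \<longleftrightarrow> (\<exists>x y. y > 0 \<and> p2 * q2 * (x^2 + y^2) - (p1 * q2 + q1 * p2) * x + p1 * q1 = 0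
                      \<and> r2 * u2 * (x^2 + y^2) - (r1 * u2 + u1 * r2) * x + r1 * u1 = 0)"
      unfolding axA axB
    proof safe
      fix z assume "Im z > 0" "p2 * q2 * ((Re z)^2 + (Im z)^2) - (p1 * q2 + q1 * p2) * Re z + p1 * q1 = 0"
        "Im z > 0" "r2 * u2 * ((Re z)^2 + (Im z)^2) - (r1 * u2 + u1 * r2) * Re z + r1 * u1 = 0"
      then show "\<exists>x y. y > 0 \<and> p2 * q2 * (x^2 + y^2) - (p1 * q2 + q1 * p2) * x + p1 * q1 = 0
                      \<and> r2 * u2 * (x^2 + y^2) - (r1 * u2 + u1 * r2) * x + r1 * u1 = 0" by blast
    next
      fix x y :: real assume "y > 0" "p2 * q2 * (x^2 + y^2) - (p1 * q2 + q1 * p2) * x + p1 * q1 = 0"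
                      "r2 * u2 * (x^2 + y^2) - (r1 * u2 + u1 * r2) * x + r1 * u1 = 0"
      then show "\<exists>z. z \<in> {z. Im z > 0 \<and> p2 * q2 * ((Re z)^2 + (Im z)^2) - (p1 * q2 + q1 * p2) * Re z + p1 * q1 = 0}
          \<and> z \<in> {z. Im z > 0 \<and> r2 * u2 * ((Re z)^2 + (Im z)^2) - (r1 * u2 + u1 * r2) * Re z + r1 * u1 = 0}"
        by (intro exI[of _ "Complex x y"]) simp
    qed
    also have "\<dots> \<longleftrightarrow> Xp * Yp < 0"
      unfolding inter_iff[OF Dp[unfolded Dp_def] Dr[unfolded Dr_def] ne1 ne2] Xp_def Yp_def by (simp add: mult.assoc)
    finally show ?thesis .
  qed
  have inter2: "axes_intersecting A B \<longleftrightarrow> XX < 0"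
  proof -
    have "XX * YY = (Dp * Dr)^2 * (Xp * Yp)" unfolding XX_def YY_def by (simp add: power2_eq_square algebra_simps)
    then have "Xp * Yp < 0 \<longleftrightarrow> XX * YY < 0" using DD by (simp add: mult_less_0_iff)
    also have "\<dots> \<longleftrightarrow> XX < 0" using YYpos by (simp add: mult_less_0_iff)
    finally show ?thesis using inter by simp
  qed
  have endp: "{attr A, repel A} \<inter> {attr B, repel B} \<noteq> {} \<longleftrightarrow> XX = 0"
  proof -
    have a1: "pj (p1,p2) \<noteq> pj (u1,u2)" using pj_eq[OF pnz unz] pu by simp
    have a2: "pj (q1,q2) \<noteq> pj (r1,r2)" using pj_eq[OF qnz rnz] rq by (simp add: algebra_simps)
    have "{attr A, repel A} \<inter> {attr B, repel B} \<noteq> {} \<longleftrightarrow> pj (p1,p2) = pj (r1,r2) \<or> pj (q1,q2) = pj (u1,u2)"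
      unfolding attrA repA attrB repB using a1 a2 by auto
    also have "\<dots> \<longleftrightarrow> p1 * r2 - p2 * r1 = 0 \<or> q1 * u2 - q2 * u1 = 0"
      using pj_eq[OF pnz rnz] pj_eq[OF qnz unz] by simp
    also have "\<dots> \<longleftrightarrow> Xp = 0"
    proof -
      have "Xp = - ((p1 * r2 - p2 * r1) * (q1 * u2 - q2 * u1))" unfolding Xp_def by (simp add: algebra_simps)
      then show ?thesis by simp
    qed
    also have "\<dots> \<longleftrightarrow> XX = 0" unfolding XX_def using Dp Dr by simp
    finally show ?thesis .
  qed
  have asym: "axes_asymptotically_parallel A B \<longleftrightarrow> XX = 0"
  proof
    assume "axes_asymptotically_parallel A B"
    then show "XX = 0" using endp unfolding axes_asymptotically_parallel_def by blast
  next
    assume X0: "XX = 0"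
    then have "\<not> axes_intersecting A B" using inter2 by simp
    then have "axis A \<inter> axis B = {}" unfolding axes_intersecting_def by simp
    then have "axis A \<noteq> axis B" using axAne by auto
    then show "axes_asymptotically_parallel A B" using endp X0 unfolding axes_asymptotically_parallel_def by blast
  qed
  have ultra: "axes_ultraparallel A B \<longleftrightarrow> XX > 0"
    unfolding axes_ultraparallel_def using inter2 endp unfolding axes_intersecting_def by auto
  show ?thesis using L1 L2 L3 inter2 asym ultra by simp
qed


end
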